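(* Let $n\ge1$, let $F(x,y_0,\ldots,y_n)\not\equiv0$ be holomorphic in a neighbourhood of $0\in\mathbb{C}^{n+2}$ with $F(0)=0$, and let $\varphi=\sum_{k=1}^{\infty}c_k(t)x^{\lambda_k}$ ($t=\ln x$, $c_k\in\mathbb{C}[t]$, $c_1\not\equiv0$, $\lambda_k\in\mathbb{C}$, $0<\mathrm{Re}\,\lambda_1\le\mathrm{Re}\,\lambda_2\le\ldots\to\infty$) be a Dulac series which is a formal solution of $F(x,y,\delta y,\ldots,\delta^ny)=0$, $\delta=x\,d/dx$. Assume $F'_{y_n}(x,\varphi,\ldots,\delta^n\varphi)\not\equiv0$ and that for each $j=0,\ldots,n$, $$F'_{y_j}(x,\varphi,\ldots,\delta^n\varphi)=A_j\,x^{\nu}+B_j(t)\,x^{\nu_j}+\ldots,\qquad A_j\in\mathbb{C},\ B_j\in\mathbb{C}[t]\setminus\{0\},\ \mathrm{Re}\,\nu_j>\mathrm{Re}\,\nu,$$ where the dots denote terms $b(t)x^\sigma$ with $\mathrm{Re}\,\sigma\ge\mathrm{Re}\,\nu_j$, $\nu\in\mathbb{C}$ is common to all $j$, and at least one $A_j\ne0$. Let $\ell=\max\{j\mid A_j\ne0\}$, let $s=+\infty$ if $A_n\ne0$ and $s=\min_{j>\ell}(\mathrm{Re}\,\nu_j-\mathrm{Re}\,\nu)/(j-\ell)$ if $A_n=0$, and let $\tau=(n-\ell)s$ if $\ell<n$ and $\tau=0$ if $\ell=n$. For $m\in\mathbb{N}$ put $\varphi_m=\sum_{k=1}^mc_k(t)x^{\lambda_k}$.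 Then there exists $m\in\mathbb{N}$ such that the substitution $y=\varphi_m+x^{\lambda_m}u$ transforms the equation $F(x,y,\delta y,\ldots,\delta^ny)=0$ (after division by $x^{\lambda_m+\nu}$) into an equation of the form $$L(\lambda_m+\delta)u+\widetilde{L}(t,x,\lambda_m+\delta)u+N\bigl(t,x,x^{\tau}u,x^{\tau}(\lambda_m+\delta)u,\ldots,x^{\tau}(\lambda_m+\delta)^nu\bigr)=0,$$ where: - $L(\zeta)=\sum_{j=0}^{\ell}A_j\zeta^j$, and $L(\lambda_m+z)\ne0$ for all $z\in\mathbb{C}$ with $\mathrm{Re}\,z\ge0$; - $\widetilde{L}(t,x,\zeta)=\sum_{j=0}^{n}\bigl(B_j(t)x^{\mu_j}+\ldots\bigr)\zeta^j\in\mathcal{D}^{\circ}[\zeta]$ with $\mu_j=\nu_j-\nu$ (each coefficient is a convergent Dulac series with leading term $B_j(t)x^{\mu_j}$); - $N(t,x,u_0,\ldots,u_n)=\sum_{\mathbf{q}\in\mathbb{Z}_+^{n+1}}a_{\mathbf{q}}(t,x)u_0^{q_0}\cdots u_n^{q_n}$ with $a_{\mathbf{q}}\in\mathcal{D}^{\circ}$, is holomorphic in $(u_0,\ldots,u_n)$ in a neighbourhood of $0\in\mathbb{C}^{n+1}$, and contains no terms of degree exactly one in $u_0,\ldots,u_n$.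
   Context: Dulac series, the action of $\delta$ on them ($\delta\sum c_k(t)x^{\lambda_k}=\sum(\lambda_k+d/dt)c_k(t)x^{\lambda_k}$; note $\delta(x^{\lambda_m}u)=x^{\lambda_m}(\lambda_m+\delta)u$), substitution into holomorphic $F$ via Taylor series, and formal solutions are as usual. $\mathcal{D}^{\circ}$ denotes the ring of Dulac series (exponents with positive real parts, real parts tending to infinity, polynomial coefficients in $t=\ln x$) that converge in some open sector with vertex at $0$, of sufficiently small radius and opening less than $2\pi$. *)

theory Defs
  imports "HOL-Analysis.Analysis" "HOL-Computational_Algebra.Polynomial"
begin

text \<open>Formal Dulac series: a map from exponents (complex) to polynomial coefficients in t = ln x.
  D represents the formal sum over l of (D l)(t) x^l.\<close>
type_synonym dulac = "complex \<Rightarrow> complex poly"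

definition dulac :: "dulac \<Rightarrow> bool" where
  "dulac D \<longleftrightarrow> (\<forall>R. finite {l. D l \<noteq> 0 \<and> Re l < R})"

definition dmon :: "complex \<Rightarrow> complex poly \<Rightarrow> dulac" where
  "dmon a p = (\<lambda>l. if l = a then p else 0)"

definition dadd :: "dulac \<Rightarrow> dulac \<Rightarrow> dulac" where
  "dadd D E = (\<lambda>l. D l + E l)"

definition dmul :: "dulac \<Rightarrow> dulac \<Rightarrow> dulac" where
  "dmul D E = (\<lambda>s. \<Sum>a | D a \<noteq> 0 \<and> E (s - a) \<noteq> 0. D a * E (s - a))"

fun dpow :: "dulac \<Rightarrow> nat \<Rightarrow> dulac" where
  "dpow D 0 = dmon 0 1"
| "dpow D (Suc k) = dmul D (dpow D k)"

fun dprodn :: "nat \<Rightarrow> (nat \<Rightarrow> dulac) \<Rightarrow> dulac" where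
  "dprodn 0 G = dmon 0 1"
| "dprodn (Suc k) G = dmul (dprodn k G) (G k)"

text \<open>delta = x d/dx acting on Dulac series: delta (c(t) x^l) = (l c(t) + c'(t)) x^l.\<close>
definition ddelta :: "dulac \<Rightarrow> dulac" where
  "ddelta D = (\<lambda>l. smult l (D l) + pderiv (D l))"

text \<open>multiplication by x^a\<close>
definition dshift :: "complex \<Rightarrow> dulac \<Rightarrow> dulac" where
  "dshift a D = (\<lambda>s. D (s - a))"

definition MI :: "nat \<Rightarrow> (nat \<Rightarrow> nat) set" where
  "MI k = {\<alpha>. \<forall>i\<ge>k. \<alpha> i = 0}"

definition msize :: "nat \<Rightarrow> (nat \<Rightarrow> nat) \<Rightarrow> nat" where
  "msize k \<alpha> = (\<Sum>i<k. \<alpha> i)"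

text \<open>A holomorphic germ at 0 in k complex variables, given by its Taylor coefficients
  f (alpha) (coefficient of z_0^alpha_0 ... z_(k-1)^alpha_(k-1)), convergent in a polydisc.\<close>
definition conv_ps :: "nat \<Rightarrow> ((nat \<Rightarrow> nat) \<Rightarrow> complex) \<Rightarrow> bool" where
  "conv_ps k f \<longleftrightarrow> (\<forall>\<alpha>. \<alpha> \<notin> MI k \<longrightarrow> f \<alpha> = 0) \<and>
     (\<exists>r>0. (\<lambda>\<alpha>. norm (f \<alpha>) * r ^ msize k \<alpha>) summable_on MI k)"

text \<open>Monomial x^(alpha 0) * Y_0^(alpha 1) * ... * Y_(k-1)^(alpha k)\<close>
definition dterm :: "nat \<Rightarrow> (nat \<Rightarrow> dulac) \<Rightarrow> (nat \<Rightarrow> nat) \<Rightarrow> dulac" where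
  "dterm k Y \<alpha> = dmul (dmon (of_nat (\<alpha> 0)) 1) (dprodn k (\<lambda>j. dpow (Y j) (\<alpha> (Suc j))))"

text \<open>Formal substitution F(x, Y_0, ..., Y_(k-1)) of Dulac series into a power series f
  in k+1 variables (x, y_0, ..., y_(k-1)), via the Taylor series of F.\<close>
definition dsubst :: "nat \<Rightarrow> ((nat \<Rightarrow> nat) \<Rightarrow> complex) \<Rightarrow> (nat \<Rightarrow> dulac) \<Rightarrow> dulac" where
  "dsubst k f Y = (\<lambda>s. \<Sum>\<alpha> | \<alpha> \<in> MI (Suc k) \<and> f \<alpha> \<noteq> 0 \<and> dterm k Y \<alpha> s \<noteq> 0.
                         smult (f \<alpha>) (dterm k Y \<alpha> s))"

text \<open>Taylor coefficients of the partial derivative with respect to y_j\<close>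
definition pdy :: "((nat \<Rightarrow> nat) \<Rightarrow> complex) \<Rightarrow> nat \<Rightarrow> (nat \<Rightarrow> nat) \<Rightarrow> complex" where
  "pdy f j \<alpha> = of_nat (\<alpha> (Suc j) + 1) * f (\<alpha>(Suc j := \<alpha> (Suc j) + 1))"

text \<open>taylorc k f q: coefficient (a power series in x, y) of w^q in F(x, y_0 + w_0, ..., y_(k-1) + w_(k-1))\<close>
definition taylorc :: "nat \<Rightarrow> ((nat \<Rightarrow> nat) \<Rightarrow> complex) \<Rightarrow> (nat \<Rightarrow> nat) \<Rightarrow> (nat \<Rightarrow> nat) \<Rightarrow> complex" where
  "taylorc k f q \<alpha> = of_nat (\<Prod>j<k. (\<alpha> (Suc j) + q j) choose (q j)) *
      f (\<lambda>i. if i = 0 then \<alpha> 0 else \<alpha> i + q (i - 1))"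

definition dphi :: "(nat \<Rightarrow> complex poly) \<Rightarrow> (nat \<Rightarrow> complex) \<Rightarrow> dulac" where
  "dphi c lam = (\<lambda>s. \<Sum>k | 1 \<le> k \<and> lam k = s. c k)"

definition dphim :: "(nat \<Rightarrow> complex poly) \<Rightarrow> (nat \<Rightarrow> complex) \<Rightarrow> nat \<Rightarrow> dulac" where
  "dphim c lam m = (\<lambda>s. \<Sum>k | 1 \<le> k \<and> k \<le> m \<and> lam k = s. c k)"

text \<open>Open sectors with vertex 0, radius r, opening a < 2 pi, direction th, in the
  logarithmic coordinate t = ln x (so x = exp t).\<close>
definition is_sector :: "complex set \<Rightarrow> bool" where
  "is_sector S \<longleftrightarrow> (\<exists>th a r. 0 < a \<and> a < 2 * pi \<and> 0 < r \<and>
      S = {t. Re t < ln r \<and> \<bar>Im t - th\<bar> < a / 2})"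

definition in_Dcirc :: "complex set \<Rightarrow> dulac \<Rightarrow> bool" where
  "in_Dcirc S D \<longleftrightarrow> dulac D \<and> (\<forall>l. D l \<noteq> 0 \<longrightarrow> 0 < Re l) \<and>
     (\<forall>t\<in>S. (\<lambda>l. poly (D l) t * exp (l * t)) summable_on UNIV)"

definition deval :: "dulac \<Rightarrow> complex \<Rightarrow> complex" where
  "deval D t = (\<Sum>\<^sub>\<infinity>l. poly (D l) t * exp (l * t))"

definition ell :: "nat \<Rightarrow> (nat \<Rightarrow> complex) \<Rightarrow> nat" where
  "ell n A = Max {j. j \<le> n \<and> A j \<noteq> 0}"

text \<open>tau = (n - ell) * s; when ell = n (i.e. A_n \<noteq> 0, s = +infinity) tau = 0.\<close>
definition tau :: "nat \<Rightarrow> (nat \<Rightarrow> complex) \<Rightarrow> complex \<Rightarrow> (nat \<Rightarrow> complex) \<Rightarrow> real" where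
  "tau n A nu nuj = (if ell n A = n then 0 else
     real (n - ell n A) * Min {(Re (nuj j) - Re nu) / real (j - ell n A) | j. ell n A < j \<and> j \<le> n})"

definition unitv :: "nat \<Rightarrow> nat \<Rightarrow> nat" where
  "unitv j = (\<lambda>i. if i = j then 1 else 0)"

end

theory Submission
  imports Defs
begin

definition nonneg :: "dulac \<Rightarrow> bool" where
  "nonneg D \<longleftrightarrow> (\<forall>l. D l \<noteq> 0 \<longrightarrow> 0 \<le> Re l)"

definition nice :: "dulac \<Rightarrow> bool" where
  "nice D \<longleftrightarrow> dulac D \<and> nonneg D"

lemma dulac_finite_le: "dulac D \<Longrightarrow> finite {l. D l \<noteq> 0 \<and> Re l \<le> R}"
  unfolding dulac_def by (rule finite_subset[of _ "{l. D l \<noteq> 0 \<and> Re l < R + 1}"]) auto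

lemma dmul_superset:
  assumes "finite T" "{a. D a \<noteq> 0 \<and> E (s - a) \<noteq> 0} \<subseteq> T"
  shows "dmul D E s = (\<Sum>a\<in>T. D a * E (s - a))"
  unfolding dmul_def
  by (rule sum.mono_neutral_left) (use assms in auto)

lemma dmul_idx_sub:
  assumes "nonneg E"
  shows "{a. D a \<noteq> 0 \<and> E (s - a) \<noteq> 0} \<subseteq> {a. D a \<noteq> 0 \<and> Re a \<le> Re s}"
  using assms unfolding nonneg_def by force

lemma dmul_std:
  assumes "dulac D" "nonneg E"
  shows "dmul D E s = (\<Sum>a\<in>{a. D a \<noteq> 0 \<and> Re a \<le> Re s}. D a * E (s - a))"
  by (rule dmul_superset) (use assms dulac_finite_le dmul_idx_sub[of E D s] in auto)

lemma dmul_nz: assumes "dmul D E s \<noteq> 0" obtains a where "D a \<noteq> 0" "E (s - a) \<noteq> 0"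
proof -
  have "{a. D a \<noteq> 0 \<and> E (s - a) \<noteq> 0} \<noteq> {}"
  proof
    assume "{a. D a \<noteq> 0 \<and> E (s - a) \<noteq> 0} = {}"
    then have "dmul D E s = 0" unfolding dmul_def by (simp only: sum.empty)
    with assms show False by simp
  qed
  then show ?thesis using that by auto
qed

lemma dmul_comm: "dmul D E = dmul E D"
proof
  fix s
  show "dmul D E s = dmul E D s"
    unfolding dmul_def
    by (rule sum.reindex_bij_witness[of _ "\<lambda>b. s - b" "\<lambda>a. s - a"]) (auto simp: mult.commute)
qed

lemma dmul_nonneg: assumes "nonneg D" "nonneg E" shows "nonneg (dmul D E)"
  unfolding nonneg_def
proof (intro allI impI)
  fix s assume "dmul D E s \<noteq> 0"
  then obtain a where "D a \<noteq> 0" "E (s - a) \<noteq> 0"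
    by (meson dmul_nz)
  with assms have "0 \<le> Re a" "0 \<le> Re (s - a)" unfolding nonneg_def by auto
  then show "0 \<le> Re s" by simp
qed

lemma dmul_dulac: assumes "nice D" "nice E" shows "dulac (dmul D E)"
  unfolding dulac_def
proof
  fix R
  have "{s. dmul D E s \<noteq> 0 \<and> Re s < R} \<subseteq>
        (\<lambda>(a,b). a + b) ` ({a. D a \<noteq> 0 \<and> Re a < R} \<times> {b. E b \<noteq> 0 \<and> Re b < R})"
  proof
    fix s assume "s \<in> {s. dmul D E s \<noteq> 0 \<and> Re s < R}"
    then have s: "dmul D E s \<noteq> 0" "Re s < R" by auto
    then obtain a where a: "D a \<noteq> 0" "E (s - a) \<noteq> 0"
      by (meson dmul_nz)
    with assms have "0 \<le> Re a" "0 \<le> Re (s - a)" unfolding nice_def nonneg_def by auto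
    with a s show "s \<in> (\<lambda>(a,b). a + b) ` ({a. D a \<noteq> 0 \<and> Re a < R} \<times> {b. E b \<noteq> 0 \<and> Re b < R})"
      by (intro image_eqI[of _ _ "(a, s - a)"]) auto
  qed
  moreover have "finite ({a. D a \<noteq> 0 \<and> Re a < R} \<times> {b. E b \<noteq> 0 \<and> Re b < R})"
    using assms unfolding nice_def dulac_def by auto
  ultimately show "finite {s. dmul D E s \<noteq> 0 \<and> Re s < R}"
    by (meson finite_imageI finite_subset)
qed

lemma dmul_nice: "nice D \<Longrightarrow> nice E \<Longrightarrow> nice (dmul D E)"
  using dmul_dulac dmul_nonneg nice_def by blast

lemma dmul_double:
  assumes "nice D" "nice E" "finite SA" "finite SB"
    "{a. D a \<noteq> 0 \<and> Re a \<le> Re s} \<subseteq> SA" "{b. E b \<noteq> 0 \<and> Re b \<le> Re s} \<subseteq> SB"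
  shows "dmul D E s = (\<Sum>a\<in>SA. \<Sum>b\<in>SB. if a + b = s then D a * E b else 0)"
proof -
  have "dmul D E s = (\<Sum>a\<in>SA. D a * E (s - a))"
    by (rule dmul_superset) (use assms dmul_idx_sub[of E D s] in \<open>auto simp: nice_def\<close>)
  also have "\<dots> = (\<Sum>a\<in>SA. \<Sum>b\<in>SB. if a + b = s then D a * E b else 0)"
  proof (rule sum.cong[OF refl])
    fix a assume "a \<in> SA"
    have eq: "(\<Sum>b\<in>SB. if a + b = s then D a * E b else 0) = (\<Sum>b\<in>SB. if b = s - a then D a * E b else 0)"
      by (rule sum.cong) (auto simp: algebra_simps)
    show "D a * E (s - a) = (\<Sum>b\<in>SB. if a + b = s then D a * E b else 0)"
    proof (cases "D a * E (s - a) = 0")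
      case True
      then show ?thesis unfolding eq using assms(4) by (auto simp: sum.delta)
    next
      case False
      then have "D a \<noteq> 0" "E (s - a) \<noteq> 0" by auto
      with assms have "0 \<le> Re a" unfolding nice_def nonneg_def by auto
      then have "s - a \<in> SB" using assms(6) \<open>E (s - a) \<noteq> 0\<close> by auto
      then show ?thesis unfolding eq using assms(4) by (simp add: sum.delta)
    qed
  qed
  finally show ?thesis .
qed

lemma dmul_assoc:
  assumes "nice D" "nice E" "nice G"
  shows "dmul (dmul D E) G = dmul D (dmul E G)"
proof
  fix s
  define SA where "SA = {a. D a \<noteq> 0 \<and> Re a \<le> Re s}"
  define SB where "SB = {a. E a \<noteq> 0 \<and> Re a \<le> Re s}"
  define SC where "SC = {a. G a \<noteq> 0 \<and> Re a \<le> Re s}"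
  have fin: "finite SA" "finite SB" "finite SC"
    unfolding SA_def SB_def SC_def using assms dulac_finite_le nice_def by auto
  have nn: "\<And>a. D a \<noteq> 0 \<Longrightarrow> 0 \<le> Re a" "\<And>a. E a \<noteq> 0 \<Longrightarrow> 0 \<le> Re a" "\<And>a. G a \<noteq> 0 \<Longrightarrow> 0 \<le> Re a"
    using assms unfolding nice_def nonneg_def by auto
  define W where "W = {w \<in> (\<lambda>(a,b). a + b) ` (SA \<times> SB). Re w \<le> Re s}"
  define V where "V = {w \<in> (\<lambda>(a,b). a + b) ` (SB \<times> SC). Re w \<le> Re s}"
  have finW: "finite W" "finite V" unfolding W_def V_def using fin by auto
  define T where "T = (\<Sum>a\<in>SA. \<Sum>b\<in>SB. \<Sum>c\<in>SC. if a + b + c = s then D a * E b * G c else 0)"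
  have subW: "{w. dmul D E w \<noteq> 0 \<and> Re w \<le> Re s} \<subseteq> W"
  proof
    fix w assume "w \<in> {w. dmul D E w \<noteq> 0 \<and> Re w \<le> Re s}"
    then have w: "dmul D E w \<noteq> 0" "Re w \<le> Re s" by auto
    then obtain a where a: "D a \<noteq> 0" "E (w - a) \<noteq> 0"
      by (meson dmul_nz)
    have "0 \<le> Re a" "0 \<le> Re (w - a)" using nn(1)[OF a(1)] nn(2)[OF a(2)] by auto
    then have "a \<in> SA" "w - a \<in> SB" using a w unfolding SA_def SB_def by auto
    then show "w \<in> W" unfolding W_def using w by (auto intro!: image_eqI[of _ _ "(a, w - a)"])
  qed
  have subV: "{w. dmul E G w \<noteq> 0 \<and> Re w \<le> Re s} \<subseteq> V"
  proof
    fix w assume "w \<in> {w. dmul E G w \<noteq> 0 \<and> Re w \<le> Re s}"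
    then have w: "dmul E G w \<noteq> 0" "Re w \<le> Re s" by auto
    then obtain a where a: "E a \<noteq> 0" "G (w - a) \<noteq> 0"
      by (meson dmul_nz)
    have "0 \<le> Re a" "0 \<le> Re (w - a)" using nn(2)[OF a(1)] nn(3)[OF a(2)] by auto
    then have "a \<in> SB" "w - a \<in> SC" using a w unfolding SB_def SC_def by auto
    then show "w \<in> V" unfolding V_def using w by (auto intro!: image_eqI[of _ _ "(a, w - a)"])
  qed
  have L: "dmul (dmul D E) G s = T"
  proof -
    have "dmul (dmul D E) G s = (\<Sum>w\<in>W. \<Sum>c\<in>SC. if w + c = s then dmul D E w * G c else 0)"
      by (rule dmul_double) (use assms dmul_nice fin finW subW in \<open>auto simp: SC_def\<close>)
    also have "\<dots> = (\<Sum>w\<in>W. \<Sum>c\<in>SC. \<Sum>a\<in>SA. \<Sum>b\<in>SB.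
        if w + c = s \<and> a + b = w then D a * E b * G c else 0)"
    proof (intro sum.cong refl)
      fix w c assume "w \<in> W" "c \<in> SC"
      then have "Re w \<le> Re s" unfolding W_def by auto
      have "dmul D E w = (\<Sum>a\<in>SA. \<Sum>b\<in>SB. if a + b = w then D a * E b else 0)"
        by (rule dmul_double) (use assms fin \<open>Re w \<le> Re s\<close> in \<open>auto simp: SA_def SB_def\<close>)
      then show "(if w + c = s then dmul D E w * G c else 0) = (\<Sum>a\<in>SA. \<Sum>b\<in>SB.
        if w + c = s \<and> a + b = w then D a * E b * G c else 0)"
        by (cases "w + c = s") (auto simp: sum_distrib_right intro!: sum.cong)
    qed
    also have "\<dots> = (\<Sum>a\<in>SA. \<Sum>b\<in>SB. \<Sum>c\<in>SC. \<Sum>w\<in>W.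
        if w + c = s \<and> a + b = w then D a * E b * G c else 0)"
    proof -
      have 1: "\<And>w. (\<Sum>c\<in>SC. \<Sum>a\<in>SA. \<Sum>b\<in>SB. if w + c = s \<and> a + b = w then D a * E b * G c else 0)
          = (\<Sum>a\<in>SA. \<Sum>b\<in>SB. \<Sum>c\<in>SC. if w + c = s \<and> a + b = w then D a * E b * G c else 0)"
        by (subst sum.swap, rule sum.cong[OF refl], rule sum.swap)
      have 2: "(\<Sum>w\<in>W. \<Sum>a\<in>SA. \<Sum>b\<in>SB. \<Sum>c\<in>SC. if w + c = s \<and> a + b = w then D a * E b * G c else 0)
         = (\<Sum>a\<in>SA. \<Sum>b\<in>SB. \<Sum>w\<in>W. \<Sum>c\<in>SC. if w + c = s \<and> a + b = w then D a * E b * G c else 0)"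
        by (subst sum.swap, rule sum.cong[OF refl], rule sum.swap)
      show ?thesis unfolding 1 2
        by (rule sum.cong[OF refl], rule sum.cong[OF refl], rule sum.swap)
    qed
    also have "\<dots> = T" unfolding T_def
    proof (intro sum.cong refl)
      fix a b c assume abc: "a \<in> SA" "b \<in> SB" "c \<in> SC"
      have "(\<Sum>w\<in>W. if w + c = s \<and> a + b = w then D a * E b * G c else 0)
          = (\<Sum>w\<in>W. if w = a + b then (if a + b + c = s then D a * E b * G c else 0) else 0)"
        by (rule sum.cong) auto
      also have "\<dots> = (if a + b + c = s then D a * E b * G c else 0)"
      proof (cases "a + b \<in> W")
        case True then show ?thesis using finW by (simp add: sum.delta sum.delta')
      next
        case False
        then have "Re (a + b) > Re s" using abc unfolding W_def by auto
        moreover have "0 \<le> Re c" using abc nn unfolding SC_def by auto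
        ultimately have "a + b + c \<noteq> s" by auto
        then show ?thesis using finW by (simp add: sum.delta sum.delta')
      qed
      finally show "(\<Sum>w\<in>W. if w + c = s \<and> a + b = w then D a * E b * G c else 0)
          = (if a + b + c = s then D a * E b * G c else 0)" .
    qed
    finally show ?thesis .
  qed
  have R: "dmul D (dmul E G) s = T"
  proof -
    have "dmul D (dmul E G) s = (\<Sum>a\<in>SA. \<Sum>v\<in>V. if a + v = s then D a * dmul E G v else 0)"
      by (rule dmul_double) (use assms dmul_nice fin finW subV in \<open>auto simp: SA_def\<close>)
    also have "\<dots> = (\<Sum>a\<in>SA. \<Sum>v\<in>V. \<Sum>b\<in>SB. \<Sum>c\<in>SC.
        if a + v = s \<and> b + c = v then D a * E b * G c else 0)"
    proof (intro sum.cong refl)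
      fix a v assume "a \<in> SA" "v \<in> V"
      then have "Re v \<le> Re s" unfolding V_def by auto
      have "dmul E G v = (\<Sum>b\<in>SB. \<Sum>c\<in>SC. if b + c = v then E b * G c else 0)"
        by (rule dmul_double) (use assms fin \<open>Re v \<le> Re s\<close> in \<open>auto simp: SB_def SC_def\<close>)
      then show "(if a + v = s then D a * dmul E G v else 0) = (\<Sum>b\<in>SB. \<Sum>c\<in>SC.
        if a + v = s \<and> b + c = v then D a * E b * G c else 0)"
        by (cases "a + v = s") (auto simp: sum_distrib_left mult.assoc intro!: sum.cong)
    qed
    also have "\<dots> = (\<Sum>a\<in>SA. \<Sum>b\<in>SB. \<Sum>c\<in>SC. \<Sum>v\<in>V.
        if a + v = s \<and> b + c = v then D a * E b * G c else 0)"
      by (rule sum.cong[OF refl], subst sum.swap, rule sum.cong[OF refl], rule sum.swap)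
    also have "\<dots> = T" unfolding T_def
    proof (intro sum.cong refl)
      fix a b c assume abc: "a \<in> SA" "b \<in> SB" "c \<in> SC"
      have "(\<Sum>v\<in>V. if a + v = s \<and> b + c = v then D a * E b * G c else 0)
          = (\<Sum>v\<in>V. if v = b + c then (if a + b + c = s then D a * E b * G c else 0) else 0)"
        by (rule sum.cong) (auto simp: add.assoc)
      also have "\<dots> = (if a + b + c = s then D a * E b * G c else 0)"
      proof (cases "b + c \<in> V")
        case True then show ?thesis using finW by (simp add: sum.delta sum.delta')
      next
        case False
        then have "Re (b + c) > Re s" using abc unfolding V_def by auto
        moreover have "0 \<le> Re a" using abc nn unfolding SA_def by auto
        ultimately have "a + b + c \<noteq> s" by auto
        then show ?thesis using finW by (simp add: sum.delta sum.delta')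
      qed
      finally show "(\<Sum>v\<in>V. if a + v = s \<and> b + c = v then D a * E b * G c else 0)
          = (if a + b + c = s then D a * E b * G c else 0)" .
    qed
    finally show ?thesis .
  qed
  show "dmul (dmul D E) G s = dmul D (dmul E G) s" using L R by simp
qed

lemma nonneg_dulac_add: "nice D \<Longrightarrow> nice E \<Longrightarrow> nice (\<lambda>l. D l + E l)"
  unfolding nice_def nonneg_def dulac_def
proof (intro conjI allI impI)
  fix R assume "(\<forall>R. finite {l. D l \<noteq> 0 \<and> Re l < R}) \<and> (\<forall>l. D l \<noteq> 0 \<longrightarrow> 0 \<le> Re l)"
    "(\<forall>R. finite {l. E l \<noteq> 0 \<and> Re l < R}) \<and> (\<forall>l. E l \<noteq> 0 \<longrightarrow> 0 \<le> Re l)"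
  then show "finite {l. D l + E l \<noteq> 0 \<and> Re l < R}"
    by (rule_tac finite_subset[of _ "{l. D l \<noteq> 0 \<and> Re l < R} \<union> {l. E l \<noteq> 0 \<and> Re l < R}"]) auto
next
  fix l assume "(\<forall>R. finite {l. D l \<noteq> 0 \<and> Re l < R}) \<and> (\<forall>l. D l \<noteq> 0 \<longrightarrow> 0 \<le> Re l)"
    "(\<forall>R. finite {l. E l \<noteq> 0 \<and> Re l < R}) \<and> (\<forall>l. E l \<noteq> 0 \<longrightarrow> 0 \<le> Re l)" "D l + E l \<noteq> 0"
  then show "0 \<le> Re l" by (cases "D l = 0") auto
qed

lemma nice_neg: "nice D \<Longrightarrow> nice (\<lambda>l. - D l)"
  unfolding nice_def nonneg_def dulac_def by auto

lemma nice_zero: "nice (\<lambda>_. 0)"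
  unfolding nice_def nonneg_def dulac_def by auto

lemma nice_dmon: "0 \<le> Re a \<Longrightarrow> nice (dmon a p)"
  unfolding nice_def nonneg_def dulac_def dmon_def
  by (auto intro: finite_subset[of _ "{a}"])

lemma dmul_distrib:
  assumes "nice D" "nice E" "nice G"
  shows "dmul D (\<lambda>l. E l + G l) = (\<lambda>l. dmul D E l + dmul D G l)"
proof
  fix s
  have n: "nice (\<lambda>l. E l + G l)" using assms nonneg_dulac_add by blast
  show "dmul D (\<lambda>l. E l + G l) s = dmul D E s + dmul D G s"
    using assms n unfolding nice_def
    by (simp add: dmul_std sum.distrib distrib_left)
qed

lemma dmul_one: "dmul (dmon 0 1) D = D"
proof
  fix s
  have "dmul (dmon 0 1) D s = (\<Sum>a\<in>{0}. dmon 0 1 a * D (s - a))"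
    by (rule dmul_superset) (auto simp: dmon_def split: if_splits)
  then show "dmul (dmon 0 1) D s = D s" by (simp add: dmon_def)
qed

lemma dmul_zero: "dmul (\<lambda>_. 0) D = (\<lambda>_. 0)"
  unfolding dmul_def by auto

typedef ns = "{D. nice D}" morphisms rep abst
  using nice_zero by blast

lemma rep_nice: "nice (rep x)" using rep by auto

lemma rep_inj: "rep x = rep y \<Longrightarrow> x = y" using rep_inject by auto

instantiation ns :: comm_ring_1
begin
definition "zero_ns = abst (\<lambda>_. 0)"
definition "one_ns = abst (dmon 0 1)"
definition "plus_ns x y = abst (\<lambda>l. rep x l + rep y l)"
definition "uminus_ns x = abst (\<lambda>l. - rep x l)"
definition "minus_ns x y = abst (\<lambda>l. rep x l - rep y l)"
definition "times_ns x y = abst (dmul (rep x) (rep y))"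

lemma rep_zero[simp]: "rep 0 = (\<lambda>_. 0)"
  unfolding zero_ns_def by (simp add: abst_inverse nice_zero)
lemma rep_one[simp]: "rep 1 = dmon 0 1"
  unfolding one_ns_def by (simp add: abst_inverse nice_dmon)
lemma rep_plus[simp]: "rep (x + y) = (\<lambda>l. rep x l + rep y l)"
  unfolding plus_ns_def by (simp add: abst_inverse nonneg_dulac_add rep_nice)
lemma rep_uminus[simp]: "rep (- x) = (\<lambda>l. - rep x l)"
  unfolding uminus_ns_def by (simp add: abst_inverse nice_neg rep_nice)
lemma rep_minus[simp]: "rep (x - y) = (\<lambda>l. rep x l - rep y l)"
proof -
  have "nice (\<lambda>l. rep x l - rep y l)"
    using nonneg_dulac_add[OF rep_nice[of x] nice_neg[OF rep_nice[of y]]] by simp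
  then show ?thesis unfolding minus_ns_def by (simp add: abst_inverse)
qed
lemma rep_times[simp]: "rep (x * y) = dmul (rep x) (rep y)"
  unfolding times_ns_def by (simp add: abst_inverse dmul_nice rep_nice)

instance
proof
  fix a b c :: ns
  show "a * b * c = a * (b * c)"
    by (rule rep_inj) (simp add: dmul_assoc rep_nice)
  show "a * b = b * a" by (rule rep_inj) (simp add: dmul_comm)
  show "1 * a = a" by (rule rep_inj) (simp add: dmul_one)
  show "(a + b) * c = a * c + b * c"
    by (rule rep_inj) (simp add: dmul_comm[of _ "rep c"] dmul_distrib rep_nice)
  show "a + b + c = a + (b + c)" by (rule rep_inj) (simp add: add.assoc)
  show "a + b = b + a" by (rule rep_inj) (simp add: add.commute)
  show "0 + a = a" by (rule rep_inj) simp
  show "- a + a = 0" by (rule rep_inj) simp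
  show "a - b = a + - b" by (rule rep_inj) simp
  show "(0::ns) \<noteq> 1"
  proof
    assume "(0::ns) = 1"
    then have "rep (0::ns) 0 = rep 1 0" by simp
    then show False by (simp add: dmon_def)
  qed
qed
end

lemma rep_power: "rep (x ^ k) = dpow (rep x) k"
  by (induction k) simp_all

lemma rep_prod: "rep (\<Prod>j<k. G j) = dprodn k (\<lambda>j. rep (G j))"
  by (induction k) simp_all

lemma rep_sum: "rep (\<Sum>j\<in>A. G j) = (\<lambda>l. \<Sum>j\<in>A. rep (G j) l)"
  by (induction A rule: infinite_finite_induct) auto

definition small :: "real \<Rightarrow> ns \<Rightarrow> bool" where
  "small c x \<longleftrightarrow> (\<forall>l. rep x l \<noteq> 0 \<longrightarrow> c \<le> Re l)"

lemma small_0[simp]: "small c 0" unfolding small_def by simp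

lemma small_add: "small c x \<Longrightarrow> small c y \<Longrightarrow> small c (x + y)"
  unfolding small_def by (metis add.right_neutral rep_plus)

lemma small_uminus: "small c x \<Longrightarrow> small c (- x)"
  unfolding small_def by simp

lemma small_diff: "small c x \<Longrightarrow> small c y \<Longrightarrow> small c (x - y)"
  using small_add small_uminus by (metis diff_conv_add_uminus)

lemma small_mono: "small c x \<Longrightarrow> d \<le> c \<Longrightarrow> small d x"
  unfolding small_def by force

lemma small_mult: "small c x \<Longrightarrow> small d y \<Longrightarrow> small (c + d) (x * y)"
  unfolding small_def
proof (intro allI impI)
  fix s assume a: "\<forall>l. rep x l \<noteq> 0 \<longrightarrow> c \<le> Re l" "\<forall>l. rep y l \<noteq> 0 \<longrightarrow> d \<le> Re l"
    "rep (x * y) s \<noteq> 0"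
  then obtain b where "rep x b \<noteq> 0" "rep y (s - b) \<noteq> 0" by (auto elim: dmul_nz)
  with a show "c + d \<le> Re s" by force
qed

lemma small_nonneg: "small 0 x"
  using rep_nice[of x] unfolding small_def nice_def nonneg_def by auto

lemma small_sum: "(\<And>i. i \<in> A \<Longrightarrow> small c (G i)) \<Longrightarrow> small c (\<Sum>i\<in>A. G i)"
  by (induction A rule: infinite_finite_induct) (auto intro: small_add)

lemma small_power: "small c x \<Longrightarrow> small (real k * c) (x ^ k)"
proof (induction k)
  case 0
  then show ?case using small_nonneg by simp
next
  case (Suc k)
  then have "small (c + real k * c) (x * x ^ k)" using small_mult by blast
  then show ?case by (simp add: algebra_simps)
qed

lemma small_smult: "small c x \<Longrightarrow> small c (abst (\<lambda>l. smult a (rep x l)))"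
proof -
  assume "small c x"
  have "nice (\<lambda>l. smult a (rep x l))" using rep_nice[of x]
    unfolding nice_def nonneg_def dulac_def
    by (auto intro: finite_subset[of _ "{l. rep x l \<noteq> 0 \<and> Re l < _}"])
  with \<open>small c x\<close> show ?thesis unfolding small_def by (simp add: abst_inverse)
qed

lemma taylor_pow:
  assumes "small r b" "0 \<le> r"
  shows "small (2 * r) ((a + b) ^ k - a ^ k - of_nat k * a ^ (k - 1) * b)"
proof (induction k)
  case 0
  then show ?case by simp
next
  case (Suc k)
  have eq: "(a + b) ^ Suc k - a ^ Suc k - of_nat (Suc k) * a ^ (Suc k - 1) * b
      = (a + b) * ((a + b) ^ k - a ^ k - of_nat k * a ^ (k - 1) * b) + of_nat k * a ^ (k - 1) * (b * b)"
  proof (cases k)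
    case 0 then show ?thesis by (simp add: algebra_simps)
  next
    case (Suc k')
    then show ?thesis by (simp add: algebra_simps)
  qed
  have "small (0 + 2 * r) ((a + b) * ((a + b) ^ k - a ^ k - of_nat k * a ^ (k - 1) * b))"
    by (rule small_mult[OF small_nonneg Suc.IH])
  moreover have "small (0 + (r + r)) (of_nat k * a ^ (k - 1) * (b * b))"
    by (rule small_mult[OF small_nonneg small_mult[OF assms(1) assms(1)]])
  ultimately show ?case unfolding eq by (auto intro: small_add)
qed

lemma taylor_prod_gen:
  fixes K :: nat and P d :: "nat \<Rightarrow> ns"
  assumes "\<And>j. small r (d j)" "0 \<le> r"
  shows "small (2 * r) ((\<Prod>j<K. P j + d j) - (\<Prod>j<K. P j)
          - (\<Sum>j<K. d j * (\<Prod>i\<in>{..<K} - {j}. P i)))"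
proof (induction K)
  case 0
  then show ?case by simp
next
  case (Suc K)
  define Q where "Q = (\<Prod>j<K. P j)"
  define S where "S = (\<Sum>j<K. d j * (\<Prod>i\<in>{..<K} - {j}. P i))"
  define E where "E = (\<Prod>j<K. P j + d j) - Q - S"
  have S1: "(\<Sum>j<Suc K. d j * (\<Prod>i\<in>{..<Suc K} - {j}. P i)) = S * P K + d K * Q"
  proof -
    have "(\<Sum>j<K. d j * (\<Prod>i\<in>{..<Suc K} - {j}. P i)) = (\<Sum>j<K. d j * (\<Prod>i\<in>{..<K} - {j}. P i) * P K)"
    proof (rule sum.cong[OF refl])
      fix j assume "j \<in> {..<K}"
      then have "{..<Suc K} - {j} = insert K ({..<K} - {j})" by auto
      then show "d j * (\<Prod>i\<in>{..<Suc K} - {j}. P i) = d j * (\<Prod>i\<in>{..<K} - {j}. P i) * P K"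
        by (simp add: mult.commute mult.left_commute)
    qed
    moreover have "{..<Suc K} - {K} = {..<K}" by auto
    ultimately show ?thesis unfolding S_def Q_def by (simp add: sum_distrib_right)
  qed
  have eq: "(\<Prod>j<Suc K. P j + d j) - (\<Prod>j<Suc K. P j) - (\<Sum>j<Suc K. d j * (\<Prod>i\<in>{..<Suc K} - {j}. P i))
      = S * d K + E * (P K + d K)"
    unfolding S1 by (simp add: E_def Q_def algebra_simps)
  have sS: "small r S" unfolding S_def
    by (rule small_sum) (metis add_0 small_mult[OF assms(1) small_nonneg] mult.commute add.commute)
  have "small (r + r) (S * d K)" by (rule small_mult[OF sS assms(1)])
  moreover have "small (2 * r + 0) (E * (P K + d K))"
    by (rule small_mult[OF _ small_nonneg]) (use Suc.IH in \<open>simp add: E_def Q_def S_def\<close>)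
  ultimately show ?case unfolding eq by (auto intro: small_add)
qed

lemma taylor_prod:
  fixes K :: nat and a b :: "nat \<Rightarrow> ns"
  assumes "\<And>j. small r (b j)" "0 \<le> r"
  shows "small (2 * r) ((\<Prod>j<K. (a j + b j) ^ k j) - (\<Prod>j<K. a j ^ k j)
          - (\<Sum>j<K. of_nat (k j) * a j ^ (k j - 1) * b j * (\<Prod>i\<in>{..<K} - {j}. a i ^ k i)))"
proof -
  define e where "e j = (a j + b j) ^ k j - a j ^ k j - of_nat (k j) * a j ^ (k j - 1) * b j" for j
  define d where "d j = (a j + b j) ^ k j - a j ^ k j" for j
  have se: "small (2 * r) (e j)" for j unfolding e_def by (rule taylor_pow[OF assms(1) assms(2)])
  have sd: "small r (d j)" for j
  proof -
    have "small (0 + r) (of_nat (k j) * a j ^ (k j - 1) * b j)"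
      by (rule small_mult[OF small_nonneg assms(1)])
    moreover have "small r (e j)" by (rule small_mono[OF se]) (use assms(2) in simp)
    moreover have "d j = e j + of_nat (k j) * a j ^ (k j - 1) * b j" by (simp add: d_def e_def)
    ultimately show ?thesis by (auto intro: small_add)
  qed
  have 1: "small (2 * r) ((\<Prod>j<K. a j ^ k j + d j) - (\<Prod>j<K. a j ^ k j)
          - (\<Sum>j<K. d j * (\<Prod>i\<in>{..<K} - {j}. a i ^ k i)))"
    by (rule taylor_prod_gen[OF sd assms(2)])
  have 2: "small (2 * r) (\<Sum>j<K. e j * (\<Prod>i\<in>{..<K} - {j}. a i ^ k i))"
    by (rule small_sum) (metis add_0_right small_mult[OF se small_nonneg])
  have eq: "(\<Prod>j<K. (a j + b j) ^ k j) - (\<Prod>j<K. a j ^ k j)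
          - (\<Sum>j<K. of_nat (k j) * a j ^ (k j - 1) * b j * (\<Prod>i\<in>{..<K} - {j}. a i ^ k i))
     = ((\<Prod>j<K. a j ^ k j + d j) - (\<Prod>j<K. a j ^ k j)
          - (\<Sum>j<K. d j * (\<Prod>i\<in>{..<K} - {j}. a i ^ k i)))
       + (\<Sum>j<K. e j * (\<Prod>i\<in>{..<K} - {j}. a i ^ k i))"
    by (simp add: d_def e_def algebra_simps sum.distrib[symmetric] sum_subtractf[symmetric])
  show ?thesis unfolding eq by (rule small_add[OF 1 2])
qed

lemma loc_prod:
  fixes K :: nat and a b :: "nat \<Rightarrow> ns"
  assumes "\<And>j. small r (b j)" "0 \<le> r"
  shows "small r ((\<Prod>j<K. (a j + b j) ^ k j) - (\<Prod>j<K. a j ^ k j))"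
proof -
  have 1: "small r ((\<Prod>j<K. (a j + b j) ^ k j) - (\<Prod>j<K. a j ^ k j)
          - (\<Sum>j<K. of_nat (k j) * a j ^ (k j - 1) * b j * (\<Prod>i\<in>{..<K} - {j}. a i ^ k i)))"
    by (rule small_mono[OF taylor_prod[OF assms]]) (use assms(2) in simp)
  have 2: "small r (\<Sum>j<K. of_nat (k j) * a j ^ (k j - 1) * b j * (\<Prod>i\<in>{..<K} - {j}. a i ^ k i))"
    apply (rule small_sum)
    using small_mult[OF small_mult[OF small_nonneg assms(1)] small_nonneg] by simp
  show ?thesis using small_add[OF 1 2] by simp
qed

lemma finite_MI_bounded: "finite {\<alpha> \<in> MI m. \<forall>i. \<alpha> i \<le> N}"
proof -
  let ?S = "{\<alpha> \<in> MI m. \<forall>i. \<alpha> i \<le> N}"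
  let ?f = "\<lambda>\<alpha>. map \<alpha> [0..<m]"
  have "inj_on ?f ?S"
  proof
    fix x y assume xy: "x \<in> ?S" "y \<in> ?S" "?f x = ?f y"
    show "x = y"
    proof
      fix i show "x i = y i"
      proof (cases "i < m")
        case True
        then have "?f x ! i = ?f y ! i" using xy by simp
        with True show ?thesis by simp
      next
        case False
        then show ?thesis using xy unfolding MI_def by auto
      qed
    qed
  qed
  moreover have "?f ` ?S \<subseteq> {xs. set xs \<subseteq> {..N} \<and> length xs = m}" by auto
  then have "finite (?f ` ?S)" by (rule finite_subset) (rule finite_lists_length_eq, simp)
  ultimately show ?thesis using finite_imageD by blast
qed

definition Xs :: ns where "Xs = abst (dmon 1 1)"
definition Cst :: "complex \<Rightarrow> ns" where "Cst c = abst (dmon 0 [:c:])"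

lemma rep_Xs: "rep Xs = dmon 1 1" unfolding Xs_def by (simp add: abst_inverse nice_dmon)
lemma rep_Cst: "rep (Cst c) = dmon 0 [:c:]" unfolding Cst_def by (simp add: abst_inverse nice_dmon)

lemma dmul_dmon: "dmul (dmon a p) (dmon b q) = dmon (a + b) (p * q)"
proof
  fix s
  have "dmul (dmon a p) (dmon b q) s = (\<Sum>x\<in>{a}. dmon a p x * dmon b q (s - x))"
    by (rule dmul_superset) (auto simp: dmon_def split: if_splits)
  then show "dmul (dmon a p) (dmon b q) s = dmon (a + b) (p * q) s"
    by (auto simp: dmon_def algebra_simps)
qed

lemma dmul_dmon0: "dmul (dmon 0 [:c:]) D = (\<lambda>s. smult c (D s))"
proof
  fix s
  have "dmul (dmon 0 [:c:]) D s = (\<Sum>x\<in>{0}. dmon 0 [:c:] x * D (s - x))"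
    by (rule dmul_superset) (auto simp: dmon_def split: if_splits)
  then show "dmul (dmon 0 [:c:]) D s = smult c (D s)" by (simp add: dmon_def)
qed

lemma rep_Xs_pow: "rep (Xs ^ n) = dmon (of_nat n) 1"
  by (induction n) (simp_all add: rep_Xs dmul_dmon algebra_simps)

lemma rep_Cst_mult: "rep (Cst c * z) = (\<lambda>s. smult c (rep z s))"
  by (simp add: rep_Cst dmul_dmon0)

lemma Cst_mult: "Cst (c * d) = Cst c * Cst d"
  by (rule rep_inj) (simp add: rep_Cst dmul_dmon ac_simps)

lemma rep_of_nat: "rep (of_nat n) = dmon 0 (of_nat n)"
proof (induction n)
  case 0 then show ?case by (simp add: dmon_def)
next
  case (Suc n) then show ?case by (auto simp: dmon_def)
qed

lemma of_nat_Cst: "(of_nat n :: ns) = Cst (of_nat n)"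
  by (rule rep_inj) (simp add: rep_of_nat rep_Cst of_nat_poly)

lemma small_Xs_pow: "small (real n) (Xs ^ n)"
  unfolding small_def rep_Xs_pow by (auto simp: dmon_def)

lemma small_prod: "finite A \<Longrightarrow> (\<And>j. j \<in> A \<Longrightarrow> small (c j) (G j)) \<Longrightarrow> small (\<Sum>j\<in>A. c j) (\<Prod>j\<in>A. G j)"
proof (induction A rule: finite_induct)
  case empty then show ?case using small_nonneg by simp
next
  case (insert x F) then show ?case by (simp add: small_mult)
qed

lemma dprodn_cong: "(\<And>j. j < k \<Longrightarrow> G j = G' j) \<Longrightarrow> dprodn k G = dprodn k G'"
  by (induction k) auto

definition mnm :: "nat \<Rightarrow> (nat \<Rightarrow> ns) \<Rightarrow> (nat \<Rightarrow> nat) \<Rightarrow> ns" where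
  "mnm k y \<alpha> = Xs ^ (\<alpha> 0) * (\<Prod>j<k. y j ^ \<alpha> (Suc j))"

lemma dterm_mono:
  assumes "\<And>j. j < k \<Longrightarrow> nice (Y j)"
  shows "dterm k Y \<alpha> = rep (mnm k (\<lambda>j. abst (Y j)) \<alpha>)"
proof -
  have "dprodn k (\<lambda>j. dpow (Y j) (\<alpha> (Suc j))) = dprodn k (\<lambda>j. rep (abst (Y j) ^ \<alpha> (Suc j)))"
    by (rule dprodn_cong) (simp add: rep_power abst_inverse assms)
  then show ?thesis
    unfolding dterm_def mnm_def by (simp add: rep_prod rep_Xs_pow)
qed

lemma small_mono_term:
  assumes "\<And>j. j < k \<Longrightarrow> small c (y j)" "0 \<le> c"
  shows "small (real (\<alpha> 0) + c * real (\<Sum>j<k. \<alpha> (Suc j))) (mnm k y \<alpha>)"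
proof -
  have "small (\<Sum>j<k. real (\<alpha> (Suc j)) * c) (\<Prod>j<k. y j ^ \<alpha> (Suc j))"
    by (rule small_prod) (auto intro: small_power assms)
  then have "small (c * real (\<Sum>j<k. \<alpha> (Suc j))) (\<Prod>j<k. y j ^ \<alpha> (Suc j))"
    by (simp add: sum_distrib_left mult.commute)
  then show ?thesis unfolding mnm_def by (rule small_mult[OF small_Xs_pow])
qed

definition PS :: "nat \<Rightarrow> ((nat \<Rightarrow> nat) \<Rightarrow> complex) \<Rightarrow> (nat \<Rightarrow> ns) \<Rightarrow> (nat \<Rightarrow> nat) set \<Rightarrow> ns" where
  "PS k g y U = (\<Sum>\<alpha>\<in>U. Cst (g \<alpha>) * mnm k y \<alpha>)"

definition UR :: "nat \<Rightarrow> real \<Rightarrow> real \<Rightarrow> (nat \<Rightarrow> nat) set" where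
  "UR k c R = {\<alpha> \<in> MI (Suc k). real (\<alpha> 0) + c * real (\<Sum>j<k. \<alpha> (Suc j)) < R}"

lemma finite_UR: assumes "0 < c" shows "finite (UR k c R)"
proof -
  obtain N :: nat where N: "R \<le> real N" "R / c \<le> real N"
    by (metis max.bounded_iff real_arch_simple)
  have "UR k c R \<subseteq> {\<alpha> \<in> MI (Suc k). \<forall>i. \<alpha> i \<le> N}"
  proof safe
    fix \<alpha> i assume a: "\<alpha> \<in> UR k c R"
    then have mi: "\<alpha> \<in> MI (Suc k)" and lt: "real (\<alpha> 0) + c * real (\<Sum>j<k. \<alpha> (Suc j)) < R"
      unfolding UR_def by auto
    show "\<alpha> \<in> MI (Suc k)" by (rule mi)
    have s0: "0 \<le> c * real (\<Sum>j<k. \<alpha> (Suc j))"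
      using mult_nonneg_nonneg[OF less_imp_le[OF assms] of_nat_0_le_iff] by blast
    show "\<alpha> i \<le> N"
    proof (cases i)
      case 0
      have "real (\<alpha> 0) < real N" using lt s0 N by linarith
      then show ?thesis using 0 by simp
    next
      case (Suc i')
      show ?thesis
      proof (cases "i' < k")
        case True
        have "\<alpha> (Suc i') \<le> (\<Sum>j<k. \<alpha> (Suc j))"
          by (rule member_le_sum[of i' "{..<k}" "\<lambda>j. \<alpha> (Suc j)", simplified]) (use True in auto)
        then have "real (\<alpha> (Suc i')) \<le> real (\<Sum>j<k. \<alpha> (Suc j))" by (simp only: of_nat_le_iff)
        then have "c * real (\<alpha> (Suc i')) \<le> c * real (\<Sum>j<k. \<alpha> (Suc j))"
          by (rule mult_left_mono) (use assms in simp)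
        also have "\<dots> < R" using lt by simp
        finally have "real (\<alpha> (Suc i')) < R / c" using assms by (simp add: field_simps)
        then show ?thesis using N Suc by simp
      next
        case False
        then show ?thesis using mi Suc unfolding MI_def by auto
      qed
    qed
  qed
  then show ?thesis by (rule finite_subset[OF _ finite_MI_bounded])
qed

lemma dsubst_PS:
  assumes c: "0 < c" and Y: "\<And>j. j < k \<Longrightarrow> nice (Y j)" "\<And>j. j < k \<Longrightarrow> small c (abst (Y j))"
    and s: "Re s < R"
  shows "dsubst k g Y s = rep (PS k g (\<lambda>j. abst (Y j)) (UR k c R)) s"
proof -
  let ?y = "\<lambda>j. abst (Y j)"
  have dt: "dterm k Y \<alpha> s \<noteq> 0 \<Longrightarrow> real (\<alpha> 0) + c * real (\<Sum>j<k. \<alpha> (Suc j)) \<le> Re s" for \<alpha>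
  proof -
    assume "dterm k Y \<alpha> s \<noteq> 0"
    moreover have "dterm k Y \<alpha> = rep (mnm k ?y \<alpha>)" by (rule dterm_mono[OF Y(1)])
    ultimately have "rep (mnm k ?y \<alpha>) s \<noteq> 0" by simp
    moreover have "small (real (\<alpha> 0) + c * real (\<Sum>j<k. \<alpha> (Suc j))) (mnm k ?y \<alpha>)"
      by (rule small_mono_term) (use Y c in auto)
    ultimately show ?thesis unfolding small_def by blast
  qed
  have sub: "{\<alpha>. \<alpha> \<in> MI (Suc k) \<and> g \<alpha> \<noteq> 0 \<and> dterm k Y \<alpha> s \<noteq> 0} \<subseteq> UR k c R"
  proof
    fix \<alpha> assume "\<alpha> \<in> {\<alpha>. \<alpha> \<in> MI (Suc k) \<and> g \<alpha> \<noteq> 0 \<and> dterm k Y \<alpha> s \<noteq> 0}"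
    then have a: "\<alpha> \<in> MI (Suc k)" "dterm k Y \<alpha> s \<noteq> 0" by auto
    have "real (\<alpha> 0) + c * real (\<Sum>j<k. \<alpha> (Suc j)) < R" using dt[OF a(2)] s by linarith
    then show "\<alpha> \<in> UR k c R" unfolding UR_def using a(1) by blast
  qed
  have "dsubst k g Y s = (\<Sum>\<alpha>\<in>UR k c R. smult (g \<alpha>) (dterm k Y \<alpha> s))"
    unfolding dsubst_def
    by (rule sum.mono_neutral_left) (use finite_UR[OF c] sub in \<open>auto simp: UR_def\<close>)
  also have "\<dots> = rep (PS k g ?y (UR k c R)) s"
    unfolding PS_def rep_sum by (simp add: rep_Cst dmul_dmon0 dterm_mono[OF Y(1)])
  finally show ?thesis .
qed

lemma dsubst_nice:
  assumes c: "0 < c" and Y: "\<And>j. j < k \<Longrightarrow> nice (Y j)" "\<And>j. j < k \<Longrightarrow> small c (abst (Y j))"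
  shows "nice (dsubst k g Y)"
  unfolding nice_def nonneg_def dulac_def
proof (intro conjI allI impI)
  fix R
  let ?P = "PS k g (\<lambda>j. abst (Y j)) (UR k c R)"
  have "{l. dsubst k g Y l \<noteq> 0 \<and> Re l < R} \<subseteq> {l. rep ?P l \<noteq> 0 \<and> Re l < R}"
    using dsubst_PS[OF c Y] by auto
  moreover have "finite {l. rep ?P l \<noteq> 0 \<and> Re l < R}"
    using rep_nice[of ?P] unfolding nice_def dulac_def by auto
  ultimately show "finite {l. dsubst k g Y l \<noteq> 0 \<and> Re l < R}" by (rule finite_subset)
next
  fix l assume "dsubst k g Y l \<noteq> 0"
  show "0 \<le> Re l"
  proof (rule ccontr)
    assume "\<not> 0 \<le> Re l"
    then have "Re l < 0" by simp
    then have "dsubst k g Y l = rep (PS k g (\<lambda>j. abst (Y j)) (UR k c 0)) l"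
      using dsubst_PS[OF c Y, where s=l and R=0 and g=g] by simp
    also have "\<dots> = 0" using small_nonneg[of "PS k g (\<lambda>j. abst (Y j)) (UR k c 0)"] \<open>Re l < 0\<close>
      unfolding small_def by (meson not_le)
    finally show False using \<open>dsubst k g Y l \<noteq> 0\<close> by simp
  qed
qed

lemma dsubst_small:
  assumes c: "0 < c" and Y: "\<And>j. j < k \<Longrightarrow> nice (Y j)" "\<And>j. j < k \<Longrightarrow> small c (abst (Y j))"
  shows "small R (abst (dsubst k g Y) - PS k g (\<lambda>j. abst (Y j)) (UR k c R))"
  unfolding small_def
proof (intro allI impI)
  fix l assume nz: "rep (abst (dsubst k g Y) - PS k g (\<lambda>j. abst (Y j)) (UR k c R)) l \<noteq> 0"
  have ra: "rep (abst (dsubst k g Y)) = dsubst k g Y" by (rule abst_inverse) (simp add: dsubst_nice[OF c Y])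
  show "R \<le> Re l"
  proof (rule ccontr)
    assume "\<not> R \<le> Re l" then have "Re l < R" by simp
    then have "dsubst k g Y l = rep (PS k g (\<lambda>j. abst (Y j)) (UR k c R)) l"
      using dsubst_PS[OF c Y, where s=l and R=R and g=g] by simp
    then have "rep (abst (dsubst k g Y) - PS k g (\<lambda>j. abst (Y j)) (UR k c R)) l = 0"
      by (simp only: rep_minus ra) simp
    then show False using nz by contradiction
  qed
qed

definition inc :: "nat \<Rightarrow> (nat \<Rightarrow> nat) \<Rightarrow> (nat \<Rightarrow> nat)" where
  "inc j \<beta> = \<beta>(Suc j := \<beta> (Suc j) + 1)"

lemma sum_inc: "j < k \<Longrightarrow> (\<Sum>i<k. inc j \<beta> (Suc i)) = (\<Sum>i<k. \<beta> (Suc i)) + 1"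
proof -
  assume j: "j < k"
  have "(\<Sum>i<k. inc j \<beta> (Suc i)) = (\<Sum>i<k. \<beta> (Suc i) + (if i = j then 1 else 0))"
    by (rule sum.cong) (auto simp: inc_def)
  also have "\<dots> = (\<Sum>i<k. \<beta> (Suc i)) + 1" using j by (simp add: sum.distrib)
  finally show ?thesis .
qed

lemma inc_MI: "j < k \<Longrightarrow> inc j \<beta> \<in> MI (Suc k) \<longleftrightarrow> \<beta> \<in> MI (Suc k)"
  unfolding MI_def inc_def by auto

lemma UR_key:
  assumes "j < k"
  shows "real (inc j \<beta> 0) + c * real (\<Sum>i<k. inc j \<beta> (Suc i)) = real (\<beta> 0) + c * real (\<Sum>i<k. \<beta> (Suc i)) + c"
proof -
  have e1: "(\<Sum>i<k. inc j \<beta> (Suc i)) = (\<Sum>i<k. \<beta> (Suc i)) + 1" by (rule sum_inc[OF assms])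
  have e2: "inc j \<beta> 0 = \<beta> 0" by (simp add: inc_def)
  show ?thesis by (simp only: e1 e2 of_nat_add of_nat_1) (simp add: algebra_simps)
qed

lemma UR_shift:
  assumes "j < k"
  shows "{\<beta> \<in> MI (Suc k). inc j \<beta> \<in> UR k c R} = UR k c (R - c)"
proof (intro set_eqI iffI)
  fix \<beta> assume "\<beta> \<in> {\<beta> \<in> MI (Suc k). inc j \<beta> \<in> UR k c R}"
  then have a: "\<beta> \<in> MI (Suc k)" "real (inc j \<beta> 0) + c * real (\<Sum>i<k. inc j \<beta> (Suc i)) < R"
    unfolding UR_def by auto
  then have "real (\<beta> 0) + c * real (\<Sum>i<k. \<beta> (Suc i)) < R - c" using UR_key[OF assms, of \<beta> c] by linarith
  then show "\<beta> \<in> UR k c (R - c)" unfolding UR_def using a(1) by blast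
next
  fix \<beta> assume "\<beta> \<in> UR k c (R - c)"
  then have a: "\<beta> \<in> MI (Suc k)" "real (\<beta> 0) + c * real (\<Sum>i<k. \<beta> (Suc i)) < R - c"
    unfolding UR_def by auto
  then have "real (inc j \<beta> 0) + c * real (\<Sum>i<k. inc j \<beta> (Suc i)) < R" using UR_key[OF assms, of \<beta> c] by linarith
  moreover have "inc j \<beta> \<in> MI (Suc k)" using inc_MI[OF assms] a(1) by blast
  ultimately show "\<beta> \<in> {\<beta> \<in> MI (Suc k). inc j \<beta> \<in> UR k c R}" unfolding UR_def using a(1) by blast
qed

lemma mnm_inc:
  assumes "j < k"
  shows "mnm k a (inc j \<beta>) = Xs ^ (\<beta> 0) * (a j ^ (\<beta> (Suc j) + 1) * (\<Prod>i\<in>{..<k} - {j}. a i ^ \<beta> (Suc i)))"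
proof -
  have "(\<Prod>i<k. a i ^ inc j \<beta> (Suc i)) = a j ^ inc j \<beta> (Suc j) * (\<Prod>i\<in>{..<k} - {j}. a i ^ inc j \<beta> (Suc i))"
    by (rule prod.remove) (use assms in auto)
  also have "(\<Prod>i\<in>{..<k} - {j}. a i ^ inc j \<beta> (Suc i)) = (\<Prod>i\<in>{..<k} - {j}. a i ^ \<beta> (Suc i))"
    by (rule prod.cong) (auto simp: inc_def)
  finally show ?thesis unfolding mnm_def by (simp add: inc_def)
qed

lemma mnm_split:
  assumes "j < k"
  shows "mnm k a \<beta> = Xs ^ (\<beta> 0) * (a j ^ (\<beta> (Suc j)) * (\<Prod>i\<in>{..<k} - {j}. a i ^ \<beta> (Suc i)))"
proof -
  have "(\<Prod>i<k. a i ^ \<beta> (Suc i)) = a j ^ \<beta> (Suc j) * (\<Prod>i\<in>{..<k} - {j}. a i ^ \<beta> (Suc i))"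
    by (rule prod.remove) (use assms in auto)
  then show ?thesis unfolding mnm_def by simp
qed

definition dec :: "nat \<Rightarrow> (nat \<Rightarrow> nat) \<Rightarrow> (nat \<Rightarrow> nat)" where
  "dec j \<alpha> = \<alpha>(Suc j := \<alpha> (Suc j) - 1)"

lemma inc_dec: "\<alpha> (Suc j) \<noteq> 0 \<Longrightarrow> inc j (dec j \<alpha>) = \<alpha>"
  unfolding inc_def dec_def by (rule ext) auto

lemma dec_inc: "dec j (inc j \<beta>) = \<beta>"
  unfolding inc_def dec_def by (rule ext) auto

lemma dec_MI: "\<alpha> \<in> MI m \<Longrightarrow> dec j \<alpha> \<in> MI m"
  unfolding MI_def dec_def by auto

lemma inc_Suc_j: "inc j \<beta> (Suc j) \<noteq> 0"
  unfolding inc_def by simp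

lemma lin_reindex:
  assumes "j < k" "finite U" "U \<subseteq> MI (Suc k)"
  shows "(\<Sum>\<alpha>\<in>U. Cst (g \<alpha>) * (Xs ^ \<alpha> 0 * (of_nat (\<alpha> (Suc j)) * a j ^ (\<alpha> (Suc j) - 1) *
            (\<Prod>i\<in>{..<k} - {j}. a i ^ \<alpha> (Suc i)))))
       = PS k (pdy g j) a {\<beta> \<in> MI (Suc k). inc j \<beta> \<in> U}"
proof -
  let ?T = "\<lambda>\<alpha>. Cst (g \<alpha>) * (Xs ^ \<alpha> 0 * (of_nat (\<alpha> (Suc j)) * a j ^ (\<alpha> (Suc j) - 1) *
            (\<Prod>i\<in>{..<k} - {j}. a i ^ \<alpha> (Suc i))))"
  have "(\<Sum>\<alpha>\<in>U. ?T \<alpha>) = (\<Sum>\<alpha>\<in>{\<alpha>\<in>U. \<alpha> (Suc j) \<noteq> 0 \<and> \<alpha> \<in> MI (Suc k)}. ?T \<alpha>)"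
  proof (rule sum.mono_neutral_right)
    show "finite U" by (rule assms(2))
    show "{\<alpha>\<in>U. \<alpha> (Suc j) \<noteq> 0 \<and> \<alpha> \<in> MI (Suc k)} \<subseteq> U" by auto
    show "\<forall>\<alpha>\<in>U - {\<alpha>\<in>U. \<alpha> (Suc j) \<noteq> 0 \<and> \<alpha> \<in> MI (Suc k)}. ?T \<alpha> = 0"
    proof
      fix \<alpha> assume "\<alpha> \<in> U - {\<alpha>\<in>U. \<alpha> (Suc j) \<noteq> 0 \<and> \<alpha> \<in> MI (Suc k)}"
      then have "\<alpha> (Suc j) = 0" using assms(3) by auto
      then show "?T \<alpha> = 0" by simp
    qed
  qed
  also have "\<dots> = (\<Sum>\<beta>\<in>{\<beta> \<in> MI (Suc k). inc j \<beta> \<in> U}. ?T (inc j \<beta>))"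
  proof (rule sum.reindex_bij_witness[of _ "inc j" "dec j"])
    fix \<alpha> assume a: "\<alpha> \<in> {\<alpha>\<in>U. \<alpha> (Suc j) \<noteq> 0 \<and> \<alpha> \<in> MI (Suc k)}"
    then show "inc j (dec j \<alpha>) = \<alpha>" using inc_dec by blast
    show "dec j \<alpha> \<in> {\<beta> \<in> MI (Suc k). inc j \<beta> \<in> U}" using a inc_dec dec_MI by auto
    show "?T (inc j (dec j \<alpha>)) = ?T \<alpha>" using a inc_dec by simp
  next
    fix \<beta> assume b: "\<beta> \<in> {\<beta> \<in> MI (Suc k). inc j \<beta> \<in> U}"
    show "dec j (inc j \<beta>) = \<beta>" by (rule dec_inc)
    show "inc j \<beta> \<in> {\<alpha>\<in>U. \<alpha> (Suc j) \<noteq> 0 \<and> \<alpha> \<in> MI (Suc k)}"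
      using b inc_Suc_j inc_MI[OF assms(1)] by auto
  qed
  also have "\<dots> = PS k (pdy g j) a {\<beta> \<in> MI (Suc k). inc j \<beta> \<in> U}"
    unfolding PS_def
  proof (rule sum.cong[OF refl])
    fix \<beta> assume "\<beta> \<in> {\<beta> \<in> MI (Suc k). inc j \<beta> \<in> U}"
    have "?T (inc j \<beta>) = Cst (g (inc j \<beta>)) * (Xs ^ \<beta> 0 * (of_nat (\<beta> (Suc j) + 1) * a j ^ (\<beta> (Suc j)) *
            (\<Prod>i\<in>{..<k} - {j}. a i ^ \<beta> (Suc i))))"
    proof -
      have pc: "(\<Prod>i\<in>{..<k}-{j}. a i ^ inc j \<beta> (Suc i)) = (\<Prod>i\<in>{..<k}-{j}. a i ^ \<beta> (Suc i))"
        by (rule prod.cong) (auto simp: inc_def)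
      show ?thesis by (simp only: pc) (simp add: inc_def)
    qed
    also have "\<dots> = Cst (pdy g j \<beta>) * mnm k a \<beta>"
      unfolding mnm_split[OF assms(1)] pdy_def Cst_mult inc_def[symmetric] of_nat_Cst[symmetric]
      by (simp add: algebra_simps)
    finally show "?T (inc j \<beta>) = Cst (pdy g j \<beta>) * mnm k a \<beta>" .
  qed
  finally show ?thesis .
qed

lemma PS_taylor:
  fixes a b :: "nat \<Rightarrow> ns"
  assumes b: "\<And>j. small r (b j)" and r: "0 \<le> r" and U: "finite U" "U \<subseteq> MI (Suc k)"
  shows "small (2 * r) (PS k g (\<lambda>j. a j + b j) U - PS k g a U
           - (\<Sum>j<k. b j * PS k (pdy g j) a {\<beta> \<in> MI (Suc k). inc j \<beta> \<in> U}))"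
proof -
  define t where "t j \<alpha> = of_nat (\<alpha> (Suc j)) * a j ^ (\<alpha> (Suc j) - 1) * b j * (\<Prod>i\<in>{..<k} - {j}. a i ^ \<alpha> (Suc i))" for j \<alpha>
  define T where "T j \<alpha> = Cst (g \<alpha>) * (Xs ^ \<alpha> 0 * (of_nat (\<alpha> (Suc j)) * a j ^ (\<alpha> (Suc j) - 1) *
            (\<Prod>i\<in>{..<k} - {j}. a i ^ \<alpha> (Suc i))))" for j \<alpha>
  define D where "D \<alpha> = (\<Prod>j<k. (a j + b j) ^ \<alpha> (Suc j)) - (\<Prod>j<k. a j ^ \<alpha> (Suc j)) - (\<Sum>j<k. t j \<alpha>)" for \<alpha>
  have sD: "small (2 * r) (D \<alpha>)" for \<alpha>
    unfolding D_def t_def by (rule taylor_prod[OF b r])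
  have s1: "small (2 * r) (\<Sum>\<alpha>\<in>U. Cst (g \<alpha>) * (Xs ^ \<alpha> 0 * D \<alpha>))"
    by (rule small_sum) (metis add_0 small_mult[OF small_nonneg small_mult[OF small_nonneg sD]])
  have lin: "(\<Sum>\<alpha>\<in>U. Cst (g \<alpha>) * (Xs ^ \<alpha> 0 * (\<Sum>j<k. t j \<alpha>)))
      = (\<Sum>j<k. b j * PS k (pdy g j) a {\<beta> \<in> MI (Suc k). inc j \<beta> \<in> U})"
  proof -
    have "(\<Sum>\<alpha>\<in>U. Cst (g \<alpha>) * (Xs ^ \<alpha> 0 * (\<Sum>j<k. t j \<alpha>)))
        = (\<Sum>\<alpha>\<in>U. \<Sum>j<k. Cst (g \<alpha>) * (Xs ^ \<alpha> 0 * t j \<alpha>))"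
      by (simp add: sum_distrib_left)
    also have "\<dots> = (\<Sum>j<k. \<Sum>\<alpha>\<in>U. Cst (g \<alpha>) * (Xs ^ \<alpha> 0 * t j \<alpha>))"
      by (rule sum.swap)
    also have "\<dots> = (\<Sum>j<k. b j * (\<Sum>\<alpha>\<in>U. T j \<alpha>))"
      unfolding sum_distrib_left
      by (rule sum.cong[OF refl], rule sum.cong[OF refl]) (simp add: t_def T_def ac_simps)
    also have "\<dots> = (\<Sum>j<k. b j * PS k (pdy g j) a {\<beta> \<in> MI (Suc k). inc j \<beta> \<in> U})"
    proof (rule sum.cong[OF refl])
      fix j assume "j \<in> {..<k}"
      then have j: "j < k" by simp
      show "b j * (\<Sum>\<alpha>\<in>U. T j \<alpha>) = b j * PS k (pdy g j) a {\<beta> \<in> MI (Suc k). inc j \<beta> \<in> U}"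
        by (simp only: T_def lin_reindex[OF j U(1) U(2)])
    qed
    finally show ?thesis .
  qed
  have eq: "PS k g (\<lambda>j. a j + b j) U - PS k g a U
           - (\<Sum>j<k. b j * PS k (pdy g j) a {\<beta> \<in> MI (Suc k). inc j \<beta> \<in> U})
         = (\<Sum>\<alpha>\<in>U. Cst (g \<alpha>) * (Xs ^ \<alpha> 0 * D \<alpha>))"
  proof -
    have h: "(\<Sum>\<alpha>\<in>U. Cst (g \<alpha>) * (Xs ^ \<alpha> 0 * D \<alpha>)) = PS k g (\<lambda>j. a j + b j) U - PS k g a U
        - (\<Sum>\<alpha>\<in>U. Cst (g \<alpha>) * (Xs ^ \<alpha> 0 * (\<Sum>j<k. t j \<alpha>)))"
      by (simp only: PS_def mnm_def D_def right_diff_distrib sum_subtractf)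
    show ?thesis by (simp only: h lin)
  qed
  show ?thesis unfolding eq by (rule s1)
qed

lemma PS_loc:
  fixes a b :: "nat \<Rightarrow> ns"
  assumes b: "\<And>j. small r (b j)" and r: "0 \<le> r"
  shows "small r (PS k g (\<lambda>j. a j + b j) U - PS k g a U)"
proof -
  have "small r (Cst (g \<alpha>) * (Xs ^ \<alpha> 0 * ((\<Prod>j<k. (a j + b j) ^ \<alpha> (Suc j)) - (\<Prod>j<k. a j ^ \<alpha> (Suc j)))))" for \<alpha>
  proof -
    have "small (0 + (0 + r)) (Cst (g \<alpha>) * (Xs ^ \<alpha> 0 * ((\<Prod>j<k. (a j + b j) ^ \<alpha> (Suc j)) - (\<Prod>j<k. a j ^ \<alpha> (Suc j)))))"
      by (rule small_mult[OF small_nonneg small_mult[OF small_nonneg loc_prod[OF b r]]])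
    then show ?thesis by simp
  qed
  then have "small r (\<Sum>\<alpha>\<in>U. Cst (g \<alpha>) * (Xs ^ \<alpha> 0 * ((\<Prod>j<k. (a j + b j) ^ \<alpha> (Suc j)) - (\<Prod>j<k. a j ^ \<alpha> (Suc j)))))"
    by (rule small_sum)
  moreover have "PS k g (\<lambda>j. a j + b j) U - PS k g a U = (\<Sum>\<alpha>\<in>U. Cst (g \<alpha>) * (Xs ^ \<alpha> 0 * ((\<Prod>j<k. (a j + b j) ^ \<alpha> (Suc j)) - (\<Prod>j<k. a j ^ \<alpha> (Suc j)))))"
    by (simp only: PS_def mnm_def right_diff_distrib sum_subtractf)
  ultimately show ?thesis by simp
qed

lemma fs_summable:
  fixes h :: "'a \<Rightarrow> real"
  assumes "\<And>x. x \<in> A \<Longrightarrow> 0 \<le> h x" "\<And>F. finite F \<Longrightarrow> F \<subseteq> A \<Longrightarrow> sum h F \<le> B"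
  shows "h summable_on A" "infsum h A \<le> B"
proof -
  show s: "h summable_on A"
    by (rule nonneg_bdd_above_summable_on) (use assms in \<open>auto intro!: bdd_aboveI2\<close>)
  show "infsum h A \<le> B" by (rule infsum_le_finite_sums[OF s]) (use assms in auto)
qed

definition nterm :: "dulac \<Rightarrow> complex \<Rightarrow> complex \<Rightarrow> real" where
  "nterm D t l = norm (poly (D l) t * exp (l * t))"

definition ok :: "dulac \<Rightarrow> complex \<Rightarrow> bool" where
  "ok D t \<longleftrightarrow> nterm D t summable_on UNIV"

definition NS :: "dulac \<Rightarrow> complex \<Rightarrow> real" where
  "NS D t = infsum (nterm D t) UNIV"

lemma nterm_nonneg: "0 \<le> nterm D t l" unfolding nterm_def by simp

lemma NS_nonneg: "0 \<le> NS D t" unfolding NS_def by (simp add: infsum_nonneg nterm_nonneg)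

lemma ok_sum_le: "ok D t \<Longrightarrow> finite F \<Longrightarrow> sum (nterm D t) F \<le> NS D t"
  unfolding ok_def NS_def by (rule finite_sum_le_infsum) (auto simp: nterm_nonneg)

lemma ok_bound:
  assumes "\<And>F. finite F \<Longrightarrow> sum (nterm D t) F \<le> B"
  shows "ok D t" "NS D t \<le> B"
  using fs_summable[of UNIV "nterm D t" B] assms nterm_nonneg unfolding ok_def NS_def by auto

lemma fin_supp_ok:
  assumes "finite {l. D l \<noteq> 0}"
  shows "ok D t" "NS D t \<le> sum (nterm D t) {l. D l \<noteq> 0}"
proof -
  have "sum (nterm D t) F \<le> sum (nterm D t) {l. D l \<noteq> 0}" if "finite F" for F
  proof -
    have "sum (nterm D t) F = sum (nterm D t) (F \<inter> {l. D l \<noteq> 0})"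
      by (rule sum.mono_neutral_right) (use that in \<open>auto simp: nterm_def\<close>)
    also have "\<dots> \<le> sum (nterm D t) {l. D l \<noteq> 0}"
      by (rule sum_mono2[OF assms]) (auto simp: nterm_nonneg)
    finally show ?thesis .
  qed
  then show "ok D t" "NS D t \<le> sum (nterm D t) {l. D l \<noteq> 0}" using ok_bound by blast+
qed

lemma nterm_dmul_le:
  assumes "finite {a. D a \<noteq> 0 \<and> E (s - a) \<noteq> 0}"
  shows "nterm (dmul D E) t s \<le> (\<Sum>a\<in>{a. D a \<noteq> 0 \<and> E (s - a) \<noteq> 0}. nterm D t a * nterm E t (s - a))"
proof -
  let ?I = "{a. D a \<noteq> 0 \<and> E (s - a) \<noteq> 0}"
  have "poly (dmul D E s) t * exp (s * t) = (\<Sum>a\<in>?I. (poly (D a) t * exp (a * t)) * (poly (E (s - a)) t * exp ((s - a) * t)))"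
  proof -
    have "poly (dmul D E s) t * exp (s * t) = (\<Sum>a\<in>?I. poly (D a) t * poly (E (s - a)) t * exp (s * t))"
      unfolding dmul_def by (simp add: poly_sum sum_distrib_right)
    also have "\<dots> = (\<Sum>a\<in>?I. (poly (D a) t * exp (a * t)) * (poly (E (s - a)) t * exp ((s - a) * t)))"
    proof (rule sum.cong[OF refl])
      fix a
      have "exp (s * t) = exp (a * t) * exp ((s - a) * t)" by (simp add: exp_add[symmetric] algebra_simps)
      then show "poly (D a) t * poly (E (s - a)) t * exp (s * t) = (poly (D a) t * exp (a * t)) * (poly (E (s - a)) t * exp ((s - a) * t))"
        by (simp add: ac_simps)
    qed
    finally show ?thesis .
  qed
  then show ?thesis unfolding nterm_def
    by (metis (no_types, lifting) norm_mult norm_sum sum.cong)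
qed

lemma mul_ok:
  assumes D: "nice D" and E: "nice E" and oD: "ok D t" and oE: "ok E t"
  shows "ok (dmul D E) t" "NS (dmul D E) t \<le> NS D t * NS E t"
proof -
  define I where "I s = {a. D a \<noteq> 0 \<and> E (s - a) \<noteq> 0}" for s
  have finI: "finite (I s)" for s
    unfolding I_def
    by (rule finite_subset[OF dmul_idx_sub]) (use D E dulac_finite_le in \<open>auto simp: nice_def\<close>)
  have "sum (nterm (dmul D E) t) F \<le> NS D t * NS E t" if F: "finite F" for F
  proof -
    let ?GA = "\<Union>s\<in>F. I s"
    let ?GB = "(\<lambda>(s, a). s - a) ` (SIGMA s:F. I s)"
    have fA: "finite ?GA" using F finI by auto
    have fB: "finite ?GB" using F finI by auto
    have "sum (nterm (dmul D E) t) F \<le> (\<Sum>s\<in>F. \<Sum>a\<in>I s. nterm D t a * nterm E t (s - a))"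
      by (rule sum_mono) (use nterm_dmul_le finI in \<open>auto simp: I_def\<close>)
    also have "\<dots> = (\<Sum>(s, a)\<in>(SIGMA s:F. I s). nterm D t a * nterm E t (s - a))"
      by (rule sum.Sigma) (use F finI in auto)
    also have "\<dots> = (\<Sum>(a, b)\<in>(\<lambda>(s, a). (a, s - a)) ` (SIGMA s:F. I s). nterm D t a * nterm E t b)"
      by (subst sum.reindex) (auto simp: inj_on_def case_prod_beta)
    also have "\<dots> \<le> (\<Sum>(a, b)\<in>?GA \<times> ?GB. nterm D t a * nterm E t b)"
      by (rule sum_mono2) (use fA fB in \<open>auto simp: nterm_nonneg intro!: mult_nonneg_nonneg\<close>)
    also have "\<dots> = sum (nterm D t) ?GA * sum (nterm E t) ?GB"
      by (simp add: sum_product sum.cartesian_product)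
    also have "\<dots> \<le> NS D t * NS E t"
    proof -
      have "0 \<le> sum (nterm E t) ?GB" by (rule sum_nonneg) (rule nterm_nonneg)
      then show ?thesis by (rule mult_mono[OF ok_sum_le[OF oD fA] ok_sum_le[OF oE fB] NS_nonneg])
    qed
    finally show ?thesis .
  qed
  then show "ok (dmul D E) t" "NS (dmul D E) t \<le> NS D t * NS E t" using ok_bound by blast+
qed

lemma dmon_ok: "ok (dmon a p) t" "NS (dmon a p) t \<le> norm (poly p t * exp (a * t))"
proof -
  have f: "finite {l. dmon a p l \<noteq> 0}" by (rule finite_subset[of _ "{a}"]) (auto simp: dmon_def)
  show "ok (dmon a p) t" by (rule fin_supp_ok[OF f])
  have "sum (nterm (dmon a p) t) {l. dmon a p l \<noteq> 0} \<le> norm (poly p t * exp (a * t))"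
  proof (cases "p = 0")
    case True then show ?thesis by (simp add: dmon_def)
  next
    case False
    then have "{l. dmon a p l \<noteq> 0} = {a}" by (auto simp: dmon_def)
    then show ?thesis by (simp add: nterm_def dmon_def)
  qed
  then show "NS (dmon a p) t \<le> norm (poly p t * exp (a * t))" using fin_supp_ok(2)[OF f, where t=t] by linarith
qed

lemma dpow_ok:
  assumes "nice D" "ok D t"
  shows "ok (dpow D k) t \<and> NS (dpow D k) t \<le> NS D t ^ k"
proof (induction k)
  case 0
  then show ?case using dmon_ok[of 0 1 t] by simp
next
  case (Suc k)
  have n: "nice (dpow D k)" using rep_nice[of "abst D ^ k"] rep_power[of "abst D" k] assms(1)
    by (simp add: abst_inverse)
  have "ok (dmul D (dpow D k)) t" "NS (dmul D (dpow D k)) t \<le> NS D t * NS (dpow D k) t"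
    using mul_ok[OF assms(1) n assms(2)] Suc.IH by auto
  moreover have "NS D t * NS (dpow D k) t \<le> NS D t * NS D t ^ k"
    by (rule mult_left_mono) (use Suc.IH NS_nonneg in auto)
  ultimately show ?case by simp
qed

lemma dprodn_ok:
  assumes "\<And>j. j < k \<Longrightarrow> nice (G j) \<and> ok (G j) t"
  shows "ok (dprodn k G) t \<and> NS (dprodn k G) t \<le> (\<Prod>j<k. NS (G j) t)"
  using assms
proof (induction k)
  case 0
  then show ?case using dmon_ok[of 0 1 t] by simp
next
  case (Suc k)
  have IH: "ok (dprodn k G) t \<and> NS (dprodn k G) t \<le> (\<Prod>j<k. NS (G j) t)" using Suc by auto
  have n: "nice (dprodn k G)"
  proof -
    have "dprodn k G = dprodn k (\<lambda>j. rep (abst (G j)))"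
      by (rule dprodn_cong) (use Suc.prems in \<open>auto simp: abst_inverse\<close>)
    also have "\<dots> = rep (\<Prod>j<k. abst (G j))" by (simp add: rep_prod)
    finally show ?thesis using rep_nice by simp
  qed
  have g: "nice (G k)" "ok (G k) t" using Suc.prems by auto
  have "ok (dmul (dprodn k G) (G k)) t" "NS (dmul (dprodn k G) (G k)) t \<le> NS (dprodn k G) t * NS (G k) t"
    using mul_ok[OF n g(1) _ g(2)] IH by auto
  moreover have "NS (dprodn k G) t * NS (G k) t \<le> (\<Prod>j<k. NS (G j) t) * NS (G k) t"
    by (rule mult_right_mono) (use IH NS_nonneg in auto)
  ultimately show ?case by simp
qed

lemma dpow_nice: "nice D \<Longrightarrow> nice (dpow D k)"
  using rep_nice[of "abst D ^ k"] rep_power[of "abst D" k] by (simp add: abst_inverse)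

lemma dprodn_nice: "(\<And>j. j < k \<Longrightarrow> nice (G j)) \<Longrightarrow> nice (dprodn k G)"
proof -
  assume a: "\<And>j. j < k \<Longrightarrow> nice (G j)"
  have "dprodn k G = dprodn k (\<lambda>j. rep (abst (G j)))"
    by (rule dprodn_cong) (use a in \<open>auto simp: abst_inverse\<close>)
  also have "\<dots> = rep (\<Prod>j<k. abst (G j))" by (simp add: rep_prod)
  finally show ?thesis using rep_nice by simp
qed

lemma dterm_ok:
  assumes Y: "\<And>j. j < k \<Longrightarrow> nice (Y j) \<and> ok (Y j) t"
  shows "ok (dterm k Y \<alpha>) t \<and> NS (dterm k Y \<alpha>) t \<le> norm (exp t) ^ (\<alpha> 0) * (\<Prod>j<k. NS (Y j) t ^ \<alpha> (Suc j))"
proof -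
  let ?P = "dprodn k (\<lambda>j. dpow (Y j) (\<alpha> (Suc j)))"
  have pn: "nice ?P" by (rule dprodn_nice) (use Y dpow_nice in auto)
  have po: "ok ?P t \<and> NS ?P t \<le> (\<Prod>j<k. NS (dpow (Y j) (\<alpha> (Suc j))) t)"
    by (rule dprodn_ok) (use Y dpow_nice dpow_ok in blast)
  have pb: "(\<Prod>j<k. NS (dpow (Y j) (\<alpha> (Suc j))) t) \<le> (\<Prod>j<k. NS (Y j) t ^ \<alpha> (Suc j))"
    by (rule prod_mono) (use Y dpow_ok NS_nonneg in auto)
  have mn: "nice (dmon (of_nat (\<alpha> 0)) 1)" by (rule nice_dmon) simp
  have m: "ok (dterm k Y \<alpha>) t" "NS (dterm k Y \<alpha>) t \<le> NS (dmon (of_nat (\<alpha> 0)) 1) t * NS ?P t"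
    unfolding dterm_def using mul_ok[OF mn pn dmon_ok(1)] po by auto
  have e: "NS (dmon (of_nat (\<alpha> 0)) 1) t \<le> norm (exp t) ^ (\<alpha> 0)"
    using dmon_ok(2)[of "of_nat (\<alpha> 0)" 1 t] by (simp add: exp_of_nat_mult norm_power)
  have "NS (dmon (of_nat (\<alpha> 0)) 1) t * NS ?P t \<le> norm (exp t) ^ (\<alpha> 0) * (\<Prod>j<k. NS (Y j) t ^ \<alpha> (Suc j))"
    by (rule mult_mono[OF e]) (use po pb NS_nonneg in auto)
  then show ?thesis using m by auto
qed

lemma dterm_support:
  assumes c: "0 < c" and Y: "\<And>j. j < k \<Longrightarrow> nice (Y j)" "\<And>j. j < k \<Longrightarrow> small c (abst (Y j))"
    and nz: "dterm k Y \<alpha> s \<noteq> 0"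
  shows "real (\<alpha> 0) + c * real (\<Sum>j<k. \<alpha> (Suc j)) \<le> Re s"
proof -
  let ?y = "\<lambda>j. abst (Y j)"
  have "dterm k Y \<alpha> = rep (mnm k ?y \<alpha>)" by (rule dterm_mono[OF Y(1)])
  with nz have "rep (mnm k ?y \<alpha>) s \<noteq> 0" by simp
  moreover have "small (real (\<alpha> 0) + c * real (\<Sum>j<k. \<alpha> (Suc j))) (mnm k ?y \<alpha>)"
    by (rule small_mono_term) (use Y c in auto)
  ultimately show ?thesis unfolding small_def by blast
qed

lemma msize_Suc: "msize (Suc k) \<alpha> = \<alpha> 0 + (\<Sum>j<k. \<alpha> (Suc j))"
  unfolding msize_def by (rule sum.lessThan_Suc_shift)

lemma dsubst_ok:
  assumes c: "0 < c"
    and Y: "\<And>j. j < k \<Longrightarrow> nice (Y j)" "\<And>j. j < k \<Longrightarrow> small c (abst (Y j))"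
      "\<And>j. j < k \<Longrightarrow> ok (Y j) t" "\<And>j. j < k \<Longrightarrow> NS (Y j) t \<le> \<rho>"
    and et: "norm (exp t) \<le> \<rho>"
    and sg: "(\<lambda>\<alpha>. norm (g \<alpha>) * \<rho> ^ msize (Suc k) \<alpha>) summable_on MI (Suc k)"
  shows "ok (dsubst k g Y) t" "NS (dsubst k g Y) t \<le> infsum (\<lambda>\<alpha>. norm (g \<alpha>) * \<rho> ^ msize (Suc k) \<alpha>) (MI (Suc k))"
proof -
  have rho: "0 \<le> \<rho>" using et norm_ge_zero order_trans by blast
  define A where "A s = {\<alpha>. \<alpha> \<in> MI (Suc k) \<and> g \<alpha> \<noteq> 0 \<and> dterm k Y \<alpha> s \<noteq> 0}" for s
  have finA: "finite (A s)" for s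
  proof -
    have "A s \<subseteq> UR k c (Re s + 1)"
    proof
      fix \<alpha> assume "\<alpha> \<in> A s"
      then have a: "\<alpha> \<in> MI (Suc k)" "dterm k Y \<alpha> s \<noteq> 0" unfolding A_def by auto
      have "real (\<alpha> 0) + c * real (\<Sum>j<k. \<alpha> (Suc j)) < Re s + 1"
        using dterm_support[OF c Y(1) Y(2) a(2)] by linarith
      then show "\<alpha> \<in> UR k c (Re s + 1)" unfolding UR_def using a(1) by blast
    qed
    then show ?thesis using finite_UR[OF c] finite_subset by blast
  qed
  have AMI: "A s \<subseteq> MI (Suc k)" for s unfolding A_def by auto
  have nt: "nterm (dsubst k g Y) t s \<le> (\<Sum>\<alpha>\<in>A s. norm (g \<alpha>) * nterm (dterm k Y \<alpha>) t s)" for s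
  proof -
    have "poly (dsubst k g Y s) t * exp (s * t) = (\<Sum>\<alpha>\<in>A s. g \<alpha> * (poly (dterm k Y \<alpha> s) t * exp (s * t)))"
      unfolding dsubst_def A_def[symmetric] poly_sum sum_distrib_right by (simp add: ac_simps)
    then have "nterm (dsubst k g Y) t s = norm (\<Sum>\<alpha>\<in>A s. g \<alpha> * (poly (dterm k Y \<alpha> s) t * exp (s * t)))"
      unfolding nterm_def by simp
    also have "\<dots> \<le> (\<Sum>\<alpha>\<in>A s. norm (g \<alpha> * (poly (dterm k Y \<alpha> s) t * exp (s * t))))" by (rule norm_sum)
    also have "\<dots> = (\<Sum>\<alpha>\<in>A s. norm (g \<alpha>) * nterm (dterm k Y \<alpha>) t s)"
      unfolding nterm_def by (simp add: norm_mult)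
    finally show ?thesis .
  qed
  have dterm_b: "NS (dterm k Y \<alpha>) t \<le> \<rho> ^ msize (Suc k) \<alpha>" "ok (dterm k Y \<alpha>) t" for \<alpha>
  proof -
    have d: "ok (dterm k Y \<alpha>) t \<and> NS (dterm k Y \<alpha>) t \<le> norm (exp t) ^ (\<alpha> 0) * (\<Prod>j<k. NS (Y j) t ^ \<alpha> (Suc j))"
      by (rule dterm_ok) (use Y in auto)
    have "norm (exp t) ^ (\<alpha> 0) * (\<Prod>j<k. NS (Y j) t ^ \<alpha> (Suc j)) \<le> \<rho> ^ (\<alpha> 0) * (\<Prod>j<k. \<rho> ^ \<alpha> (Suc j))"
      by (rule mult_mono) (use et Y NS_nonneg rho in \<open>auto intro!: power_mono prod_mono prod_nonneg\<close>)
    also have "\<dots> = \<rho> ^ msize (Suc k) \<alpha>" by (simp add: msize_Suc power_add power_sum)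
    finally show "NS (dterm k Y \<alpha>) t \<le> \<rho> ^ msize (Suc k) \<alpha>" using d by linarith
    show "ok (dterm k Y \<alpha>) t" using d by simp
  qed
  have "sum (nterm (dsubst k g Y) t) F \<le> infsum (\<lambda>\<alpha>. norm (g \<alpha>) * \<rho> ^ msize (Suc k) \<alpha>) (MI (Suc k))"
    if F: "finite F" for F
  proof -
    let ?G = "\<Union>s\<in>F. A s"
    have fG: "finite ?G" using F finA by auto
    have "sum (nterm (dsubst k g Y) t) F \<le> (\<Sum>s\<in>F. \<Sum>\<alpha>\<in>A s. norm (g \<alpha>) * nterm (dterm k Y \<alpha>) t s)"
      by (rule sum_mono) (rule nt)
    also have "\<dots> \<le> (\<Sum>s\<in>F. \<Sum>\<alpha>\<in>?G. norm (g \<alpha>) * nterm (dterm k Y \<alpha>) t s)"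
      by (rule sum_mono, rule sum_mono2) (use fG F in \<open>auto simp: nterm_nonneg\<close>)
    also have "\<dots> = (\<Sum>\<alpha>\<in>?G. norm (g \<alpha>) * sum (nterm (dterm k Y \<alpha>) t) F)"
      by (subst sum.swap) (simp add: sum_distrib_left)
    also have "\<dots> \<le> (\<Sum>\<alpha>\<in>?G. norm (g \<alpha>) * \<rho> ^ msize (Suc k) \<alpha>)"
      by (rule sum_mono, rule mult_left_mono) (use ok_sum_le[OF dterm_b(2) F] dterm_b(1) in \<open>auto intro: order_trans\<close>)
    also have "\<dots> \<le> infsum (\<lambda>\<alpha>. norm (g \<alpha>) * \<rho> ^ msize (Suc k) \<alpha>) (MI (Suc k))"
      by (rule finite_sum_le_infsum[OF sg fG]) (use AMI rho in auto)
    finally show ?thesis .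
  qed
  then show "ok (dsubst k g Y) t" "NS (dsubst k g Y) t \<le> infsum (\<lambda>\<alpha>. norm (g \<alpha>) * \<rho> ^ msize (Suc k) \<alpha>) (MI (Suc k))"
    using ok_bound by blast+
qed

lemma dshift_ok:
  assumes "ok D t"
  shows "ok (dshift a D) t" "NS (dshift a D) t = norm (exp (a * t)) * NS D t"
proof -
  have eq: "nterm (dshift a D) t l = nterm D t (l - a) * norm (exp (a * t))" for l
  proof -
    have "exp (l * t) = exp ((l - a) * t) * exp (a * t)" by (simp add: exp_add[symmetric] algebra_simps)
    then show ?thesis unfolding nterm_def dshift_def by (simp add: norm_mult)
  qed
  have bij: "bij_betw (\<lambda>l. l - a) UNIV UNIV"
    by (rule bij_betwI[where g="\<lambda>l. l + a"]) auto
  have s1: "(\<lambda>l. nterm D t (l - a)) summable_on UNIV"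
    using summable_on_reindex_bij_betw[OF bij, of "nterm D t"] assms unfolding ok_def by simp
  have i1: "infsum (\<lambda>l. nterm D t (l - a)) UNIV = NS D t"
    using infsum_reindex_bij_betw[OF bij, of "nterm D t"] unfolding NS_def by simp
  show "ok (dshift a D) t" unfolding ok_def eq by (rule summable_on_cmult_left[OF s1])
  show "NS (dshift a D) t = norm (exp (a * t)) * NS D t"
    unfolding NS_def eq infsum_cmult_left[OF s1] using i1 by (simp add: NS_def mult.commute)
qed

lemma dulac_dshift: "dulac D \<Longrightarrow> dulac (dshift a D)"
  unfolding dulac_def dshift_def
proof
  fix R assume "\<forall>R. finite {l. D l \<noteq> 0 \<and> Re l < R}"
  then have "finite ((\<lambda>l. l + a) ` {l. D l \<noteq> 0 \<and> Re l < R - Re a})" by auto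
  moreover have "{l. D (l - a) \<noteq> 0 \<and> Re l < R} \<subseteq> (\<lambda>l. l + a) ` {l. D l \<noteq> 0 \<and> Re l < R - Re a}"
    by (auto intro!: image_eqI[of _ _ "_ - a"])
  ultimately show "finite {l. D (l - a) \<noteq> 0 \<and> Re l < R}" by (rule finite_subset[rotated])
qed

lemma deval_bound: "ok D t \<Longrightarrow> norm (deval D t) \<le> NS D t"
  unfolding deval_def NS_def ok_def nterm_def by (rule norm_infsum_bound)

lemma ok_summable: "ok D t \<Longrightarrow> (\<lambda>l. poly (D l) t * exp (l * t)) summable_on UNIV"
  unfolding ok_def nterm_def by (rule abs_summable_summable)

lemma geo_finite_le:
  fixes x :: real
  assumes "0 \<le> x" "x < 1" "finite V"
  shows "(\<Sum>v\<in>V. x ^ v) \<le> 1 / (1 - x)"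
proof -
  obtain N where N: "V \<subseteq> {..<N}"
    using assms(3) by (meson finite_nat_iff_bounded subset_eq lessThan_iff)
  have "(\<Sum>v\<in>V. x ^ v) \<le> (\<Sum>v<N. x ^ v)"
    by (rule sum_mono2[OF _ N]) (use assms in auto)
  also have "\<dots> = (1 - x ^ N) / (1 - x)" using assms by (simp add: sum_gp_strict)
  also have "\<dots> \<le> 1 / (1 - x)" using assms by (simp add: divide_right_mono)
  finally show ?thesis .
qed

lemma msize_split:
  assumes "q \<in> MI (Suc m)"
  shows "msize (Suc m) q = msize m (q(m := 0)) + q m" "q(m := 0) \<in> MI m"
proof -
  have "(\<Sum>i<m. (q(m := 0)) i) = (\<Sum>i<m. q i)" by (rule sum.cong) auto
  then show "msize (Suc m) q = msize m (q(m := 0)) + q m" unfolding msize_def by simp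
  show "q(m := 0) \<in> MI m" using assms unfolding MI_def by auto
qed

lemma geo_MI_finite:
  fixes x :: real
  assumes x: "0 \<le> x" "x < 1"
  shows "finite Q \<Longrightarrow> Q \<subseteq> MI m \<Longrightarrow> (\<Sum>q\<in>Q. x ^ msize m q) \<le> (1 / (1 - x)) ^ m"
proof (induction m arbitrary: Q)
  case 0
  have "Q \<subseteq> {\<lambda>_. 0}" using 0 unfolding MI_def by auto
  then have "card Q \<le> 1" using card_mono[of "{\<lambda>_. 0}" Q] by auto
  then show ?case by (simp add: msize_def)
next
  case (Suc m)
  let ?V = "(\<lambda>q. q m) ` Q"
  define Qv where "Qv v = {q \<in> Q. q m = v}" for v
  have fV: "finite ?V" using Suc.prems by auto
  have "(\<Sum>q\<in>Q. x ^ msize (Suc m) q) = (\<Sum>v\<in>?V. \<Sum>q\<in>Qv v. x ^ msize (Suc m) q)"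
    unfolding Qv_def by (rule sum.group[symmetric, OF Suc.prems(1) fV]) simp
  also have "\<dots> \<le> (\<Sum>v\<in>?V. x ^ v * (1 / (1 - x)) ^ m)"
  proof (rule sum_mono)
    fix v assume "v \<in> ?V"
    have inj: "inj_on (\<lambda>q. q(m := 0)) (Qv v)"
    proof
      fix p q assume a: "p \<in> Qv v" "q \<in> Qv v" "p(m := 0) = q(m := 0)"
      show "p = q"
      proof
        fix i
        show "p i = q i"
        proof (cases "i = m")
          case True then show ?thesis using a(1,2) by (simp add: Qv_def)
        next
          case False then show ?thesis using fun_cong[OF a(3), of i] by simp
        qed
      qed
    qed
    have "(\<Sum>q\<in>Qv v. x ^ msize (Suc m) q) = (\<Sum>q\<in>Qv v. x ^ v * x ^ msize m (q(m := 0)))"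
    proof (rule sum.cong[OF refl])
      fix q assume "q \<in> Qv v"
      then have "q \<in> MI (Suc m)" "q m = v" using Suc.prems unfolding Qv_def by auto
      then show "x ^ msize (Suc m) q = x ^ v * x ^ msize m (q(m := 0))"
        using msize_split(1)[of q m] by (simp add: power_add mult.commute)
    qed
    also have "\<dots> = x ^ v * (\<Sum>p\<in>(\<lambda>q. q(m := 0)) ` Qv v. x ^ msize m p)"
      by (simp add: sum_distrib_left sum.reindex[OF inj])
    also have "\<dots> \<le> x ^ v * (1 / (1 - x)) ^ m"
    proof (rule mult_left_mono, rule Suc.IH)
      show "finite ((\<lambda>q. q(m := 0)) ` Qv v)" using Suc.prems(1) by (simp add: Qv_def)
      show "(\<lambda>q. q(m := 0)) ` Qv v \<subseteq> MI m" using msize_split(2) Suc.prems(2) by (auto simp: Qv_def)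
      show "0 \<le> x ^ v" using x by simp
    qed
    finally show "(\<Sum>q\<in>Qv v. x ^ msize (Suc m) q) \<le> x ^ v * (1 / (1 - x)) ^ m" .
  qed
  also have "\<dots> = (\<Sum>v\<in>?V. x ^ v) * (1 / (1 - x)) ^ m" by (simp add: sum_distrib_right)
  also have "\<dots> \<le> (1 / (1 - x)) * (1 / (1 - x)) ^ m"
    by (rule mult_right_mono[OF geo_finite_le[OF x fV]]) (use x in simp)
  finally show ?case by simp
qed

lemma geo_MI:
  fixes x :: real
  assumes "0 \<le> x" "x < 1"
  shows "(\<lambda>q. x ^ msize m q) summable_on MI m"
  by (rule fs_summable(1)[where B="(1 / (1 - x)) ^ m"]) (use assms geo_MI_finite in auto)

definition sh :: "(nat \<Rightarrow> nat) \<Rightarrow> (nat \<Rightarrow> nat) \<Rightarrow> (nat \<Rightarrow> nat)" where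
  "sh q \<alpha> = (\<lambda>i. if i = 0 then \<alpha> 0 else \<alpha> i + q (i - 1))"

lemma sh_inj: "inj_on (sh q) A"
proof
  fix a b assume "sh q a = sh q b"
  then have "\<forall>i. sh q a i = sh q b i" by simp
  show "a = b"
  proof
    fix i
    have "sh q a i = sh q b i" using \<open>\<forall>i. sh q a i = sh q b i\<close> by blast
    then show "a i = b i" unfolding sh_def by (cases "i = 0") auto
  qed
qed

lemma sh_MI: "q \<in> MI k \<Longrightarrow> \<alpha> \<in> MI (Suc k) \<Longrightarrow> sh q \<alpha> \<in> MI (Suc k)"
  unfolding MI_def sh_def by auto

lemma sh_msize: "msize (Suc k) (sh q \<alpha>) = msize (Suc k) \<alpha> + msize k q"
proof -
  have "msize (Suc k) (sh q \<alpha>) = \<alpha> 0 + (\<Sum>j<k. \<alpha> (Suc j) + q j)"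
    unfolding msize_Suc by (simp add: sh_def)
  also have "\<dots> = msize (Suc k) \<alpha> + msize k q"
  proof -
    have "msize k q = (\<Sum>j<k. q j)" by (simp add: msize_def)
    then show ?thesis by (simp only: msize_Suc sum.distrib)
  qed
  finally show ?thesis .
qed

lemma taylorc_bound:
  "norm (taylorc k f q \<alpha>) \<le> 2 ^ (msize (Suc k) \<alpha> + msize k q) * norm (f (sh q \<alpha>))"
proof -
  have "(\<Prod>j<k. (\<alpha> (Suc j) + q j) choose (q j)) \<le> (\<Prod>j<k. 2 ^ (\<alpha> (Suc j) + q j))"
    by (rule prod_mono) (auto simp: binomial_le_pow2)
  also have "\<dots> = 2 ^ (\<Sum>j<k. \<alpha> (Suc j) + q j)" by (simp add: power_sum)
  also have "\<dots> \<le> 2 ^ (msize (Suc k) \<alpha> + msize k q)"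
  proof (rule power_increasing)
    have "msize k q = (\<Sum>j<k. q j)" by (simp add: msize_def)
    then show "(\<Sum>j<k. \<alpha> (Suc j) + q j) \<le> msize (Suc k) \<alpha> + msize k q"
      by (simp only: msize_Suc sum.distrib)
  qed simp
  finally have b: "real (\<Prod>j<k. (\<alpha> (Suc j) + q j) choose (q j)) \<le> 2 ^ (msize (Suc k) \<alpha> + msize k q)"
    by (metis of_nat_le_iff of_nat_numeral of_nat_power)
  have "norm (taylorc k f q \<alpha>) = real (\<Prod>j<k. (\<alpha> (Suc j) + q j) choose (q j)) * norm (f (sh q \<alpha>))"
    unfolding taylorc_def sh_def norm_mult norm_of_nat ..
  also have "\<dots> \<le> 2 ^ (msize (Suc k) \<alpha> + msize k q) * norm (f (sh q \<alpha>))"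
    by (rule mult_right_mono[OF b]) simp
  finally show ?thesis .
qed

lemma taylorc_sum:
  assumes conv: "(\<lambda>\<beta>. norm (f \<beta>) * R ^ msize (Suc k) \<beta>) summable_on MI (Suc k)"
    and R: "0 < R" and s: "0 \<le> s" "2 * s \<le> R" and q: "q \<in> MI k"
  shows "(\<lambda>\<alpha>. norm (taylorc k f q \<alpha>) * s ^ msize (Suc k) \<alpha>) summable_on MI (Suc k)"
    "infsum (\<lambda>\<alpha>. norm (taylorc k f q \<alpha>) * s ^ msize (Suc k) \<alpha>) (MI (Suc k))
       \<le> (2 / R) ^ msize k q * infsum (\<lambda>\<beta>. norm (f \<beta>) * R ^ msize (Suc k) \<beta>) (MI (Suc k))"
proof -
  let ?C = "infsum (\<lambda>\<beta>. norm (f \<beta>) * R ^ msize (Suc k) \<beta>) (MI (Suc k))"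
  have tb: "norm (taylorc k f q \<alpha>) * s ^ msize (Suc k) \<alpha>
      \<le> (2 / R) ^ msize k q * (norm (f (sh q \<alpha>)) * R ^ msize (Suc k) (sh q \<alpha>))" for \<alpha>
  proof -
    have "norm (taylorc k f q \<alpha>) * s ^ msize (Suc k) \<alpha>
        \<le> 2 ^ (msize (Suc k) \<alpha> + msize k q) * norm (f (sh q \<alpha>)) * s ^ msize (Suc k) \<alpha>"
      by (rule mult_right_mono[OF taylorc_bound]) (use s in simp)
    also have "\<dots> = 2 ^ msize k q * norm (f (sh q \<alpha>)) * (2 * s) ^ msize (Suc k) \<alpha>"
      by (simp only: power_add power_mult_distrib ac_simps)
    also have "\<dots> \<le> 2 ^ msize k q * norm (f (sh q \<alpha>)) * R ^ msize (Suc k) \<alpha>"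
      by (rule mult_left_mono, rule power_mono) (use s in auto)
    also have "\<dots> = (2 / R) ^ msize k q * (norm (f (sh q \<alpha>)) * R ^ msize (Suc k) (sh q \<alpha>))"
    proof -
      have e: "(2 / R) ^ msize k q * R ^ msize k q = 2 ^ msize k q"
        using R by (simp add: power_divide)
      show ?thesis unfolding sh_msize power_add by (simp only: e[symmetric] ac_simps)
    qed
    finally show ?thesis .
  qed
  have "sum (\<lambda>\<alpha>. norm (taylorc k f q \<alpha>) * s ^ msize (Suc k) \<alpha>) G \<le> (2 / R) ^ msize k q * ?C"
    if G: "finite G" "G \<subseteq> MI (Suc k)" for G
  proof -
    have "sum (\<lambda>\<alpha>. norm (taylorc k f q \<alpha>) * s ^ msize (Suc k) \<alpha>) G
        \<le> (\<Sum>\<alpha>\<in>G. (2 / R) ^ msize k q * (norm (f (sh q \<alpha>)) * R ^ msize (Suc k) (sh q \<alpha>)))"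
      by (rule sum_mono) (rule tb)
    also have "\<dots> = (2 / R) ^ msize k q * (\<Sum>\<beta>\<in>sh q ` G. norm (f \<beta>) * R ^ msize (Suc k) \<beta>)"
      by (simp add: sum_distrib_left sum.reindex[OF sh_inj])
    also have "\<dots> \<le> (2 / R) ^ msize k q * ?C"
      by (rule mult_left_mono, rule finite_sum_le_infsum[OF conv])
         (use G sh_MI[OF q] R in auto)
    finally show ?thesis .
  qed
  then show "(\<lambda>\<alpha>. norm (taylorc k f q \<alpha>) * s ^ msize (Suc k) \<alpha>) summable_on MI (Suc k)"
    "infsum (\<lambda>\<alpha>. norm (taylorc k f q \<alpha>) * s ^ msize (Suc k) \<alpha>) (MI (Suc k)) \<le> (2 / R) ^ msize k q * ?C"
    using fs_summable[of "MI (Suc k)" "\<lambda>\<alpha>. norm (taylorc k f q \<alpha>) * s ^ msize (Suc k) \<alpha>"] s by auto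
qed

lemma poly_bound: fixes p :: "complex poly" shows "norm (poly p t) \<le> (\<Sum>i\<le>degree p. norm (coeff p i)) * (1 + norm t) ^ degree p"
proof -
  have "norm (poly p t) \<le> (\<Sum>i\<le>degree p. norm (coeff p i) * norm t ^ i)"
    unfolding poly_altdef by (rule order_trans[OF norm_sum]) (simp add: norm_mult norm_power del: of_nat_Suc)
  also have "\<dots> \<le> (\<Sum>i\<le>degree p. norm (coeff p i) * (1 + norm t) ^ degree p)"
  proof (rule sum_mono, rule mult_left_mono)
    fix i assume "i \<in> {..degree p}"
    have "norm t ^ i \<le> (1 + norm t) ^ i" by (rule power_mono) auto
    also have "\<dots> \<le> (1 + norm t) ^ degree p" by (rule power_increasing) (use \<open>i \<in> {..degree p}\<close> in auto)
    finally show "norm t ^ i \<le> (1 + norm t) ^ degree p" .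
  qed simp
  also have "\<dots> = (\<Sum>i\<le>degree p. norm (coeff p i)) * (1 + norm t) ^ degree p"
    by (simp add: sum_distrib_right)
  finally show ?thesis .
qed

lemma decay:
  fixes c :: real
  assumes c: "0 < c"
  shows "((\<lambda>u. (2 + u) ^ d * exp (- (c * u))) \<longlongrightarrow> 0) at_top"
proof -
  have lim: "filterlim (\<lambda>u::real. c * (2 + u)) at_top at_top"
    by (rule filterlim_tendsto_pos_mult_at_top[OF tendsto_const c])
       (rule filterlim_tendsto_add_at_top[OF tendsto_const filterlim_ident])
  have "((\<lambda>u. (c * (2 + u)) ^ d / exp (c * (2 + u))) \<longlongrightarrow> 0) at_top"
    by (rule filterlim_compose[OF tendsto_power_div_exp_0 lim])
  then have "((\<lambda>u. exp (2 * c) / c ^ d * ((c * (2 + u)) ^ d / exp (c * (2 + u)))) \<longlongrightarrow> exp (2 * c) / c ^ d * 0) at_top"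
    by (rule tendsto_mult_left)
  moreover have "exp (2 * c) / c ^ d * ((c * (2 + u)) ^ d / exp (c * (2 + u))) = (2 + u) ^ d * exp (- (c * u))" for u
  proof -
    have e1: "exp (c * (2 + u)) = exp (2 * c) * exp (c * u)" by (simp add: exp_add[symmetric] algebra_simps)
    have e2: "(c * (2 + u)) ^ d = c ^ d * (2 + u) ^ d" by (rule power_mult_distrib)
    show ?thesis unfolding e1 e2 using c by (simp add: exp_minus field_simps)
  qed
  ultimately show ?thesis by simp
qed

lemma term_small:
  fixes c :: real
  assumes c: "0 < c" "c \<le> Re l" and e: "0 < \<epsilon>"
  shows "eventually (\<lambda>U. \<forall>t. Re t \<le> - U \<and> \<bar>Im t\<bar> \<le> 1 \<longrightarrow> norm (poly p t * exp (l * t)) \<le> \<epsilon>) at_top"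
proof -
  define A where "A = (\<Sum>i\<le>degree p. norm (coeff p i))"
  define K where "K = A * exp (norm l)"
  have A0: "0 \<le> A" unfolding A_def by (simp add: sum_nonneg)
  have K0: "0 \<le> K" unfolding K_def using A0 by simp
  have "eventually (\<lambda>u. (2 + u) ^ degree p * exp (- (c * u)) < \<epsilon> / (K + 1)) at_top"
    by (rule order_tendstoD(2)[OF decay[OF c(1)]]) (use e K0 in simp)
  then obtain N where N: "\<And>u. u \<ge> N \<Longrightarrow> (2 + u) ^ degree p * exp (- (c * u)) < \<epsilon> / (K + 1)"
    unfolding eventually_at_top_linorder by blast
  show ?thesis unfolding eventually_at_top_linorder
  proof (intro exI[of _ "max N 0"] allI impI)
    fix U t assume U: "U \<ge> max N 0" and t: "Re t \<le> - U \<and> \<bar>Im t\<bar> \<le> 1"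
    define u where "u = - Re t"
    have u: "u \<ge> N" "u \<ge> 0" using U t unfolding u_def by auto
    have nt: "norm t \<le> u + 1"
    proof -
      have "norm t \<le> \<bar>Re t\<bar> + \<bar>Im t\<bar>" by (rule cmod_le)
      then show ?thesis using t u unfolding u_def by auto
    qed
    have p: "norm (poly p t) \<le> A * (2 + u) ^ degree p"
    proof -
      have "norm (poly p t) \<le> A * (1 + norm t) ^ degree p" unfolding A_def by (rule poly_bound)
      also have "\<dots> \<le> A * (2 + u) ^ degree p"
        by (rule mult_left_mono[OF power_mono]) (use nt A0 in auto)
      finally show ?thesis .
    qed
    have ex: "norm (exp (l * t)) \<le> exp (norm l) * exp (- (c * u))"
    proof -
      have "norm (exp (l * t)) = exp (Re l * Re t - Im l * Im t)" by simp
      also have "\<dots> \<le> exp (norm l + - (c * u))"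
      proof (rule exp_le_cancel_iff[THEN iffD2])
        have "- (Im l * Im t) \<le> \<bar>Im l\<bar> * \<bar>Im t\<bar>" by (simp add: abs_mult[symmetric])
        also have "\<dots> \<le> \<bar>Im l\<bar> * 1" by (rule mult_left_mono) (use t in auto)
        also have "\<dots> \<le> norm l" by (simp add: abs_Im_le_cmod)
        finally have i: "- (Im l * Im t) \<le> norm l" .
        have "Re l * Re t \<le> c * Re t" using c u unfolding u_def by (intro mult_right_mono_neg) auto
        then show "Re l * Re t - Im l * Im t \<le> norm l + - (c * u)" using i unfolding u_def by simp
      qed
      also have "exp (norm l + - (c * u)) = exp (norm l) * exp (- (c * u))" by (rule exp_add)
      finally show ?thesis .
    qed
    have "norm (poly p t * exp (l * t)) \<le> A * (2 + u) ^ degree p * (exp (norm l) * exp (- (c * u)))"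
      unfolding norm_mult by (rule mult_mono[OF p ex]) (use A0 u in auto)
    also have "\<dots> = K * ((2 + u) ^ degree p * exp (- (c * u)))" unfolding K_def by (simp add: ac_simps)
    also have "\<dots> \<le> K * (\<epsilon> / (K + 1))" by (rule mult_left_mono) (use N[OF u(1)] K0 in auto)
    also have "\<dots> \<le> \<epsilon>" using K0 e by (simp add: field_simps)
    finally show "norm (poly p t * exp (l * t)) \<le> \<epsilon>" .
  qed
qed

lemma NS_small:
  fixes c :: real
  assumes fin: "finite {l. D l \<noteq> 0}" and sup: "\<And>l. D l \<noteq> 0 \<Longrightarrow> c \<le> Re l" and c: "0 < c" and e: "0 < \<epsilon>"
  shows "eventually (\<lambda>U. \<forall>t. Re t \<le> - U \<and> \<bar>Im t\<bar> \<le> 1 \<longrightarrow> NS D t \<le> \<epsilon>) at_top"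
proof -
  let ?Sp = "{l. D l \<noteq> 0}"
  define e' where "e' = \<epsilon> / (real (card ?Sp) + 1)"
  have e': "0 < e'" unfolding e'_def using e by simp
  have "eventually (\<lambda>U. \<forall>l\<in>?Sp. \<forall>t. Re t \<le> - U \<and> \<bar>Im t\<bar> \<le> 1 \<longrightarrow> norm (poly (D l) t * exp (l * t)) \<le> e') at_top"
    by (rule eventually_ball_finite[OF fin]) (use term_small[OF c _ e'] sup in blast)
  then show ?thesis
  proof (rule eventually_mono)
    fix U assume a: "\<forall>l\<in>?Sp. \<forall>t. Re t \<le> - U \<and> \<bar>Im t\<bar> \<le> 1 \<longrightarrow> norm (poly (D l) t * exp (l * t)) \<le> e'"
    show "\<forall>t. Re t \<le> - U \<and> \<bar>Im t\<bar> \<le> 1 \<longrightarrow> NS D t \<le> \<epsilon>"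
    proof (intro allI impI)
      fix t assume t: "Re t \<le> - U \<and> \<bar>Im t\<bar> \<le> 1"
      have "NS D t \<le> sum (nterm D t) ?Sp" by (rule fin_supp_ok(2)[OF fin])
      also have "\<dots> \<le> (\<Sum>l\<in>?Sp. e')" by (rule sum_mono) (use a t in \<open>auto simp: nterm_def\<close>)
      also have "\<dots> = real (card ?Sp) * e'" by simp
      also have "\<dots> \<le> \<epsilon>" unfolding e'_def using e by (simp add: field_simps)
      finally show "NS D t \<le> \<epsilon>" .
    qed
  qed
qed

definition supp_ge :: "real \<Rightarrow> dulac \<Rightarrow> bool" where
  "supp_ge c D \<longleftrightarrow> (\<forall>l. D l \<noteq> 0 \<longrightarrow> c \<le> Re l)"

lemma ddelta_zero: "D l = 0 \<Longrightarrow> ddelta D l = 0"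
  unfolding ddelta_def by simp

lemma ddelta_pow_zero: "D l = 0 \<Longrightarrow> (ddelta ^^ i) D l = 0"
  by (induction i) (auto simp: ddelta_zero)

lemma ddelta_add: "ddelta (\<lambda>l. D l + E l) = (\<lambda>l. ddelta D l + ddelta E l)"
  unfolding ddelta_def by (auto simp: smult_add_right pderiv_add)

lemma ddelta_pow_add: "(ddelta ^^ i) (\<lambda>l. D l + E l) = (\<lambda>l. (ddelta ^^ i) D l + (ddelta ^^ i) E l)"
  by (induction i) (auto simp: ddelta_add)

lemma supp_ge_ddelta: "supp_ge c D \<Longrightarrow> supp_ge c ((ddelta ^^ i) D)"
  unfolding supp_ge_def using ddelta_pow_zero[of D _ i] by blast

lemma dulac_ddelta: "dulac D \<Longrightarrow> dulac ((ddelta ^^ i) D)"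
  unfolding dulac_def
proof
  fix R assume a: "\<forall>R. finite {l. D l \<noteq> 0 \<and> Re l < R}"
  have "{l. (ddelta ^^ i) D l \<noteq> 0 \<and> Re l < R} \<subseteq> {l. D l \<noteq> 0 \<and> Re l < R}"
    using ddelta_pow_zero[of D _ i] by blast
  then show "finite {l. (ddelta ^^ i) D l \<noteq> 0 \<and> Re l < R}" by (rule finite_subset) (use a in blast)
qed

lemma finsupp_ddelta: "finite {l. D l \<noteq> 0} \<Longrightarrow> finite {l. (ddelta ^^ i) D l \<noteq> 0}"
  by (rule finite_subset[rotated]) (auto dest: ddelta_pow_zero[where i=i])

lemma nice_of: "dulac D \<Longrightarrow> supp_ge c D \<Longrightarrow> 0 \<le> c \<Longrightarrow> nice D"
  unfolding nice_def nonneg_def supp_ge_def by force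

lemma small_abst: "nice D \<Longrightarrow> supp_ge c D \<Longrightarrow> small c (abst D)"
  unfolding small_def supp_ge_def by (simp add: abst_inverse)

lemma supp_ge_of_small: "nice D \<Longrightarrow> small c (abst D) \<Longrightarrow> supp_ge c D"
  unfolding small_def supp_ge_def by (simp add: abst_inverse)

lemma lam_mono:
  assumes "\<forall>k\<ge>1. Re (lam k) \<le> Re (lam (Suc k))" "1 \<le> i" "i \<le> j"
  shows "Re (lam i) \<le> Re (lam j)"
  using assms(3)
proof (induction j)
  case 0 then show ?case using assms(2) by simp
next
  case (Suc j)
  show ?case
  proof (cases "i = Suc j")
    case True then show ?thesis by simp
  next
    case False
    then have "i \<le> j" using Suc.prems by simp
    then have "Re (lam i) \<le> Re (lam j)" "1 \<le> j" using Suc.IH assms(2) by auto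
    then show ?thesis using assms(1) by force
  qed
qed

lemma lam_fin:
  assumes "filterlim (\<lambda>k. Re (lam k)) at_top sequentially"
  shows "finite {k. Re (lam k) \<le> R}"
proof -
  have "eventually (\<lambda>k. R + 1 \<le> Re (lam k)) sequentially"
    using assms[unfolded filterlim_at_top] by blast
  then obtain N where N: "\<And>k. k \<ge> N \<Longrightarrow> R + 1 \<le> Re (lam k)" unfolding eventually_sequentially by blast
  have "{k. Re (lam k) \<le> R} \<subseteq> {..<N}"
  proof
    fix k assume "k \<in> {k. Re (lam k) \<le> R}"
    then show "k \<in> {..<N}" using N[of k] by (cases "k \<ge> N") auto
  qed
  then show ?thesis using finite_subset by blast
qed

definition dpsi :: "(nat \<Rightarrow> complex poly) \<Rightarrow> (nat \<Rightarrow> complex) \<Rightarrow> nat \<Rightarrow> dulac" where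
  "dpsi c lam m = (\<lambda>s. \<Sum>k | m < k \<and> lam k = s. c k)"

lemma sum_nz_ex: "(\<Sum>k\<in>A. f k) \<noteq> (0::'a::comm_monoid_add) \<Longrightarrow> \<exists>k\<in>A. f k \<noteq> 0"
proof (rule ccontr)
  assume a: "(\<Sum>k\<in>A. f k) \<noteq> 0" "\<not> (\<exists>k\<in>A. f k \<noteq> 0)"
  then have "(\<Sum>k\<in>A. f k) = 0" by (intro sum.neutral) blast
  with a show False by simp
qed

lemma dphi_split:
  assumes lf: "filterlim (\<lambda>k. Re (lam k)) at_top sequentially"
  shows "dphi c lam = (\<lambda>s. dphim c lam m s + dpsi c lam m s)"
proof
  fix s
  have fin: "finite {k. 1 \<le> k \<and> lam k = s}"
    by (rule finite_subset[OF _ lam_fin[OF lf, of "Re s"]]) auto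
  have "{k. 1 \<le> k \<and> lam k = s} = {k. 1 \<le> k \<and> k \<le> m \<and> lam k = s} \<union> {k. 1 \<le> k \<and> m < k \<and> lam k = s}"
    by auto
  then have "dphi c lam s = (\<Sum>k | 1 \<le> k \<and> k \<le> m \<and> lam k = s. c k) + (\<Sum>k | 1 \<le> k \<and> m < k \<and> lam k = s. c k)"
    unfolding dphi_def by (simp only:) (rule sum.union_disjoint, use fin in auto)
  moreover have "{k. 1 \<le> k \<and> m < k \<and> lam k = s} = {k. m < k \<and> lam k = s}"
    by auto
  ultimately show "dphi c lam s = dphim c lam m s + dpsi c lam m s"
    unfolding dphim_def dpsi_def by simp
qed

lemma dphim_supp: "dphim c lam m s \<noteq> 0 \<Longrightarrow> \<exists>k. 1 \<le> k \<and> k \<le> m \<and> lam k = s"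
proof -
  assume "dphim c lam m s \<noteq> 0"
  then have "(\<Sum>k\<in>{k. 1 \<le> k \<and> k \<le> m \<and> lam k = s}. c k) \<noteq> 0" unfolding dphim_def by simp
  then obtain k where "k \<in> {k. 1 \<le> k \<and> k \<le> m \<and> lam k = s}" using sum_nz_ex by blast
  then show ?thesis by blast
qed

lemma dpsi_supp: "dpsi c lam m s \<noteq> 0 \<Longrightarrow> \<exists>k. m < k \<and> lam k = s"
proof -
  assume "dpsi c lam m s \<noteq> 0"
  then have "(\<Sum>k\<in>{k. m < k \<and> lam k = s}. c k) \<noteq> 0" unfolding dpsi_def by simp
  then obtain k where "k \<in> {k. m < k \<and> lam k = s}" using sum_nz_ex by blast
  then show ?thesis by blast
qed

lemma dphi_supp: "dphi c lam s \<noteq> 0 \<Longrightarrow> \<exists>k. 1 \<le> k \<and> lam k = s"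
proof -
  assume "dphi c lam s \<noteq> 0"
  then have "(\<Sum>k\<in>{k. 1 \<le> k \<and> lam k = s}. c k) \<noteq> 0" unfolding dphi_def by simp
  then obtain k where "k \<in> {k. 1 \<le> k \<and> lam k = s}" using sum_nz_ex by blast
  then show ?thesis by blast
qed

lemma dphim_finsupp: "finite {s. dphim c lam m s \<noteq> 0}"
proof (rule finite_subset[of _ "lam ` {1..m}"])
  show "{s. dphim c lam m s \<noteq> 0} \<subseteq> lam ` {1..m}"
  proof
    fix s assume "s \<in> {s. dphim c lam m s \<noteq> 0}"
    then obtain k where "1 \<le> k" "k \<le> m" "lam k = s" using dphim_supp by blast
    then show "s \<in> lam ` {1..m}" by force
  qed
qed simp

lemma dulac_of_lam:
  assumes lf: "filterlim (\<lambda>k. Re (lam k)) at_top sequentially"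
    and sp: "\<And>s. D s \<noteq> 0 \<Longrightarrow> \<exists>k. lam k = s"
  shows "dulac D"
  unfolding dulac_def
proof
  fix R
  show "finite {l. D l \<noteq> 0 \<and> Re l < R}"
  proof (rule finite_subset[of _ "lam ` {k. Re (lam k) \<le> R}"])
    show "{l. D l \<noteq> 0 \<and> Re l < R} \<subseteq> lam ` {k. Re (lam k) \<le> R}"
    proof
      fix l assume "l \<in> {l. D l \<noteq> 0 \<and> Re l < R}"
      then obtain k where "lam k = l" "Re l < R" using sp by blast
      then show "l \<in> lam ` {k. Re (lam k) \<le> R}" by force
    qed
    show "finite (lam ` {k. Re (lam k) \<le> R})" using lam_fin[OF lf] by blast
  qed
qed

lemma unitv_MI: "j \<le> n \<Longrightarrow> unitv j \<in> MI (Suc n)"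
  unfolding MI_def unitv_def by auto

lemma msize_unitv: "j < k \<Longrightarrow> msize k (unitv j) = 1"
  unfolding msize_def unitv_def by simp

lemma unitv_inj: "unitv i = unitv j \<Longrightarrow> i = j"
  unfolding unitv_def by (metis zero_neq_one)

lemma msize_one:
  assumes q: "q \<in> MI k" and s: "msize k q = 1"
  shows "\<exists>j<k. q = unitv j"
proof -
  have "(\<Sum>i<k. q i) \<noteq> 0" using s unfolding msize_def by simp
  then obtain j where j: "j < k" "q j \<noteq> 0" using sum_nz_ex by blast
  have le: "q j \<le> 1" using member_le_sum[of j "{..<k}" q] j s unfolding msize_def by simp
  have others: "q i = 0" if "i \<noteq> j" for i
  proof (cases "i < k")
    case True
    have "q i + q j = (\<Sum>x\<in>{i, j}. q x)" using that by simp
    also have "\<dots> \<le> (\<Sum>x<k. q x)" by (rule sum_mono2) (use True j in auto)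
    finally show ?thesis using s j le unfolding msize_def by simp
  next
    case False then show ?thesis using q unfolding MI_def by auto
  qed
  have "q = unitv j"
  proof
    fix i show "q i = unitv j i" using others le j unfolding unitv_def by (cases "i = j") auto
  qed
  then show ?thesis using j by blast
qed

lemma msize_zero:
  assumes "msize k q = 0" "q \<in> MI k"
  shows "q = (\<lambda>_. 0)"
proof
  fix i
  show "q i = 0"
  proof (cases "i < k")
    case True
    have "\<forall>x\<in>{..<k}. q x = 0" using assms(1) unfolding msize_def by simp
    then show ?thesis using True by simp
  next
    case False then show ?thesis using assms(2) unfolding MI_def by simp
  qed
qed

lemma taylorc_zero: "taylorc k f (\<lambda>_. 0) = f"
proof
  fix \<alpha> :: "nat \<Rightarrow> nat"
  have "(\<lambda>i. if i = 0 then \<alpha> 0 else \<alpha> i + 0) = \<alpha>" by (rule ext) simp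
  then show "taylorc k f (\<lambda>_. 0) \<alpha> = f \<alpha>" unfolding taylorc_def by simp
qed

lemma taylorc_unitv:
  assumes "j < k"
  shows "taylorc k f (unitv j) = pdy f j"
proof
  fix \<alpha> :: "nat \<Rightarrow> nat"
  have p: "(\<Prod>i<k. (\<alpha> (Suc i) + unitv j i) choose (unitv j i)) = \<alpha> (Suc j) + 1"
  proof -
    have "(\<Prod>i<k. (\<alpha> (Suc i) + unitv j i) choose (unitv j i)) = (\<Prod>i<k. if i = j then \<alpha> (Suc j) + 1 else 1)"
      by (rule prod.cong) (auto simp: unitv_def)
    also have "\<dots> = \<alpha> (Suc j) + 1" using assms by (simp add: prod.delta)
    finally show ?thesis .
  qed
  have a: "(\<lambda>i. if i = 0 then \<alpha> 0 else \<alpha> i + unitv j (i - 1)) = \<alpha>(Suc j := \<alpha> (Suc j) + 1)"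
  proof
    fix i show "(if i = 0 then \<alpha> 0 else \<alpha> i + unitv j (i - 1)) = (\<alpha>(Suc j := \<alpha> (Suc j) + 1)) i"
      by (cases i) (auto simp: unitv_def)
  qed
  show "taylorc k f (unitv j) \<alpha> = pdy f j \<alpha>"
    unfolding taylorc_def pdy_def p a by simp
qed

lemma ell_props:
  assumes "\<exists>j\<le>n. A j \<noteq> 0"
  shows "ell n A \<le> n" "A (ell n A) \<noteq> 0" "\<And>j. ell n A < j \<Longrightarrow> j \<le> n \<Longrightarrow> A j = 0"
proof -
  let ?E = "{j. j \<le> n \<and> A j \<noteq> 0}"
  have f: "finite ?E" by (rule finite_subset[of _ "{..n}"]) auto
  have ne: "?E \<noteq> {}" using assms by auto
  have "ell n A \<in> ?E" unfolding ell_def by (rule Max_in[OF f ne])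
  then show "ell n A \<le> n" "A (ell n A) \<noteq> 0" by auto
  show "A j = 0" if "ell n A < j" "j \<le> n" for j
  proof (rule ccontr)
    assume "A j \<noteq> 0"
    then have "j \<in> ?E" using that by auto
    then have "j \<le> ell n A" unfolding ell_def using Max_ge[OF f] by blast
    then show False using that by simp
  qed
qed

lemma tau_nonneg:
  assumes "\<forall>j\<le>n. Re nu < Re (nuj j)" "ell n A \<le> n"
  shows "0 \<le> tau n A nu nuj"
proof (cases "ell n A = n")
  case True then show ?thesis unfolding tau_def by simp
next
  case False
  let ?T = "{(Re (nuj j) - Re nu) / real (j - ell n A) | j. ell n A < j \<and> j \<le> n}"
  have fT: "finite ?T"
  proof -
    have "?T = (\<lambda>j. (Re (nuj j) - Re nu) / real (j - ell n A)) ` {j. ell n A < j \<and> j \<le> n}" by blast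
    then show ?thesis by simp
  qed
  have neT: "?T \<noteq> {}" using False assms(2) by auto
  have "Min ?T \<in> ?T" by (rule Min_in[OF fT neT])
  then obtain j where j: "ell n A < j" "j \<le> n" "Min ?T = (Re (nuj j) - Re nu) / real (j - ell n A)" by auto
  have "0 < Re (nuj j) - Re nu" using assms(1) j by auto
  moreover have "0 < real (j - ell n A)" using j by simp
  ultimately have "0 \<le> Min ?T" using j(3) by simp
  then show ?thesis unfolding tau_def using False by simp
qed

lemma L_bound:
  fixes A :: "nat \<Rightarrow> complex"
  assumes "A l \<noteq> 0"
  shows "\<exists>M. \<forall>z. M < norm z \<longrightarrow> (\<Sum>j\<le>l. A j * z ^ j) \<noteq> 0"
proof -
  define p where "p = (\<Sum>j\<le>l. monom (A j) j)"
  have pz: "poly p z = (\<Sum>j\<le>l. A j * z ^ j)" for z unfolding p_def by (simp add: poly_sum poly_monom)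
  have "coeff p l = A l" unfolding p_def by (simp add: coeff_sum coeff_monom)
  then have "p \<noteq> 0" using assms by auto
  then have "finite {z. poly p z = 0}" by (rule poly_roots_finite)
  then have "bounded {z. poly p z = 0}" by (rule finite_imp_bounded)
  then obtain M where M: "\<forall>z\<in>{z. poly p z = 0}. norm z \<le> M" unfolding bounded_iff by blast
  show ?thesis
  proof (intro exI allI impI)
    fix z :: complex assume "M < norm z"
    then have "poly p z \<noteq> 0" using M by force
    then show "(\<Sum>j\<le>l. A j * z ^ j) \<noteq> 0" using pz by simp
  qed
qed

lemma PS_cong: "(\<And>j. j < k \<Longrightarrow> y j = z j) \<Longrightarrow> PS k g y U = PS k g z U"
  unfolding PS_def mnm_def by (intro sum.cong refl arg_cong2[where f="(*)"] prod.cong) auto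

lemma small_rep_eq: "small R (x - y) \<Longrightarrow> Re s < R \<Longrightarrow> rep x s = rep y s"
  unfolding small_def by force

lemma LOC:
  assumes c: "0 < c" and R1: "0 \<le> R1"
    and Y: "\<And>j. j < k \<Longrightarrow> nice (Y j)" "\<And>j. j < k \<Longrightarrow> small c (abst (Y j))"
    and Y': "\<And>j. j < k \<Longrightarrow> nice (Y' j)" "\<And>j. j < k \<Longrightarrow> small c (abst (Y' j))"
    and d: "\<And>j. j < k \<Longrightarrow> small R1 (abst (Y j) - abst (Y' j))"
    and s: "Re s < R1"
  shows "dsubst k g Y s = dsubst k g Y' s"
proof -
  let ?U = "UR k c R1"
  let ?y = "\<lambda>j. abst (Y j)" and ?y' = "\<lambda>j. abst (Y' j)"
  define b where "b j = (if j < k then abst (Y j) - abst (Y' j) else 0)" for j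
  have b: "small R1 (b j)" for j unfolding b_def using d by auto
  have P: "PS k g ?y ?U = PS k g (\<lambda>j. ?y' j + b j) ?U" by (rule PS_cong) (simp add: b_def)
  have 1: "small R1 (PS k g (\<lambda>j. ?y' j + b j) ?U - PS k g ?y' ?U)" by (rule PS_loc[OF b R1])
  have 2: "small R1 (abst (dsubst k g Y) - PS k g ?y ?U)" by (rule dsubst_small[OF c Y])
  have 3: "small R1 (abst (dsubst k g Y') - PS k g ?y' ?U)" by (rule dsubst_small[OF c Y'])
  have "abst (dsubst k g Y) - abst (dsubst k g Y') = (abst (dsubst k g Y) - PS k g ?y ?U)
      - (abst (dsubst k g Y') - PS k g ?y' ?U) + (PS k g (\<lambda>j. ?y' j + b j) ?U - PS k g ?y' ?U)"
    unfolding P by simp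
  then have "small R1 (abst (dsubst k g Y) - abst (dsubst k g Y'))"
    using small_add[OF small_diff[OF 2 3] 1] by simp
  then have "rep (abst (dsubst k g Y)) s = rep (abst (dsubst k g Y')) s" using s by (rule small_rep_eq)
  then show ?thesis by (simp add: abst_inverse dsubst_nice[OF c Y] dsubst_nice[OF c Y'])
qed

lemma TAY:
  assumes c: "0 < c" and R1: "0 \<le> R1" and V: "0 \<le> V"
    and Y: "\<And>j. j < k \<Longrightarrow> nice (Y j)" "\<And>j. j < k \<Longrightarrow> small c (abst (Y j))"
    and Y': "\<And>j. j < k \<Longrightarrow> nice (Y' j)" "\<And>j. j < k \<Longrightarrow> small c (abst (Y' j))"
    and d: "\<And>j. j < k \<Longrightarrow> small R1 (abst (Y j) - abst (Y' j))"
    and F0: "dsubst k g Y = (\<lambda>_. 0)"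
    and Fj: "\<And>j. j < k \<Longrightarrow> small V (abst (dsubst k (pdy g j) Y'))"
    and W: "W \<le> 2 * R1" "W \<le> R1 + V"
  shows "small W (abst (dsubst k g Y'))"
proof -
  define R where "R = 2 * R1 + V + c + \<bar>W\<bar>"
  have RW: "W \<le> R" "V \<le> R - c" unfolding R_def using R1 V c by auto
  let ?U = "UR k c R"
  let ?y = "\<lambda>j. abst (Y j)" and ?y' = "\<lambda>j. abst (Y' j)"
  define b where "b j = (if j < k then abst (Y j) - abst (Y' j) else 0)" for j
  have b: "small R1 (b j)" for j unfolding b_def using d by auto
  have fU: "finite ?U" by (rule finite_UR[OF c])
  have UMI: "?U \<subseteq> MI (Suc k)" unfolding UR_def by auto
  have P: "PS k g ?y ?U = PS k g (\<lambda>j. ?y' j + b j) ?U" by (rule PS_cong) (simp add: b_def)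
  have 1: "small R (abst (dsubst k g Y) - PS k g ?y ?U)" by (rule dsubst_small[OF c Y])
  have z: "abst (dsubst k g Y) = 0" unfolding F0 zero_ns_def ..
  have sP: "small R (PS k g ?y ?U)" using small_uminus[OF 1] unfolding z by simp
  have T: "small (2 * R1) (PS k g (\<lambda>j. ?y' j + b j) ?U - PS k g ?y' ?U
           - (\<Sum>j<k. b j * PS k (pdy g j) ?y' {\<beta> \<in> MI (Suc k). inc j \<beta> \<in> ?U}))"
    by (rule PS_taylor[OF b R1 fU UMI])
  have sQ: "small (R1 + V) (\<Sum>j<k. b j * PS k (pdy g j) ?y' {\<beta> \<in> MI (Suc k). inc j \<beta> \<in> ?U})"
  proof (rule small_sum)
    fix j assume "j \<in> {..<k}"
    then have j: "j < k" by simp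
    let ?Q = "PS k (pdy g j) ?y' (UR k c (R - c))"
    have e: "{\<beta> \<in> MI (Suc k). inc j \<beta> \<in> ?U} = UR k c (R - c)" by (rule UR_shift[OF j])
    have q1: "small (R - c) (abst (dsubst k (pdy g j) Y') - ?Q)" by (rule dsubst_small[OF c Y'])
    have q2: "small V (abst (dsubst k (pdy g j) Y'))" by (rule Fj[OF j])
    have "?Q = abst (dsubst k (pdy g j) Y') - (abst (dsubst k (pdy g j) Y') - ?Q)" by simp
    then have "small V ?Q" using small_diff[OF q2 small_mono[OF q1 RW(2)]] by simp
    then show "small (R1 + V) (b j * PS k (pdy g j) ?y' {\<beta> \<in> MI (Suc k). inc j \<beta> \<in> ?U})"
      unfolding e by (rule small_mult[OF b])
  qed
  define X where "X = PS k g (\<lambda>j. ?y' j + b j) ?U"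
  define S where "S = (\<Sum>j<k. b j * PS k (pdy g j) ?y' {\<beta> \<in> MI (Suc k). inc j \<beta> \<in> ?U})"
  have eq: "PS k g ?y' ?U = X - S - (X - PS k g ?y' ?U - S)" by (simp add: algebra_simps)
  have sX: "small W X" using small_mono[OF sP RW(1)] P unfolding X_def by simp
  have "small W (X - S - (X - PS k g ?y' ?U - S))"
    by (rule small_diff[OF small_diff[OF sX small_mono[OF sQ[folded S_def] W(2)]] small_mono[OF T[folded X_def S_def] W(1)]])
  then have sP': "small W (PS k g ?y' ?U)" by (simp only: eq[symmetric])
  have 3: "small R (abst (dsubst k g Y') - PS k g ?y' ?U)" by (rule dsubst_small[OF c Y'])
  have eq2: "abst (dsubst k g Y') = (abst (dsubst k g Y') - PS k g ?y' ?U) + PS k g ?y' ?U" by simp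
  have "small W ((abst (dsubst k g Y') - PS k g ?y' ?U) + PS k g ?y' ?U)"
    by (rule small_add[OF small_mono[OF 3 RW(1)] sP'])
  then show ?thesis by (simp only: eq2[symmetric])
qed

lemma dshift_dshift: "dshift a (dshift b D) = dshift (a + b) D"
  unfolding dshift_def by (simp add: algebra_simps)

lemma dulac_diff: "dulac D \<Longrightarrow> dulac E \<Longrightarrow> dulac (\<lambda>l. D l - E l)"
  unfolding dulac_def
proof
  fix R assume "\<forall>R. finite {l. D l \<noteq> 0 \<and> Re l < R}" "\<forall>R. finite {l. E l \<noteq> 0 \<and> Re l < R}"
  then have "finite ({l. D l \<noteq> 0 \<and> Re l < R} \<union> {l. E l \<noteq> 0 \<and> Re l < R})" by blast
  moreover have "{l. D l - E l \<noteq> 0 \<and> Re l < R} \<subseteq> {l. D l \<noteq> 0 \<and> Re l < R} \<union> {l. E l \<noteq> 0 \<and> Re l < R}"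
    by auto
  ultimately show "finite {l. D l - E l \<noteq> 0 \<and> Re l < R}" by (rule finite_subset[rotated])
qed

lemma dulac_dmon: "dulac (dmon a p)"
  unfolding dulac_def dmon_def by (auto intro: finite_subset[of _ "{a}"])

lemma deval_zero: "deval (\<lambda>_. 0) t = 0"
  unfolding deval_def by simp

lemma in_Dcirc_zero: "in_Dcirc S (\<lambda>_. 0)"
  unfolding in_Dcirc_def dulac_def by simp

lemma dmon0_if: "(\<lambda>\<sigma>. if \<sigma> = 0 \<and> P then [:x:] else 0) = dmon 0 (if P then [:x:] else 0)"
  unfolding dmon_def by auto

lemma summable_diff_c:
  fixes f g :: "'a \<Rightarrow> complex"
  shows "f summable_on A \<Longrightarrow> g summable_on A \<Longrightarrow> (\<lambda>x. f x - g x) summable_on A"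
  using summable_on_add[of f A "\<lambda>x. - g x"] summable_on_uminus[of g A] by simp

lemma ok_zero: "ok (\<lambda>_. 0) t"
  unfolding ok_def nterm_def by simp

lemma coeff_real_bound:
  fixes L nu tt :: real and Q :: nat
  assumes "2 \<le> Q" "2 * (nu + tt) < L" "0 \<le> nu" "0 \<le> tt"
  shows "nu + tt * real Q < (real Q - 1) * L"
proof -
  have "0 \<le> 2 * (nu + tt)" using assms(3,4) by simp
  then have L0: "0 < L" using assms(2) by linarith
  have "real Q / 2 \<le> real Q - 1" using assms(1) by simp
  then have "(real Q / 2) * L \<le> (real Q - 1) * L" using L0 by (intro mult_right_mono) auto
  moreover have "real Q * (nu + tt) < (real Q / 2) * L"
  proof -
    have "real Q * (2 * (nu + tt)) < real Q * L" using assms(1,2) by (intro mult_strict_left_mono) auto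
    then show ?thesis by (simp add: algebra_simps)
  qed
  moreover have "1 * nu \<le> real Q * nu" by (rule mult_right_mono) (use assms in auto)
  ultimately show ?thesis by (simp add: algebra_simps)
qed

theorem lemma2:
  fixes n :: nat and f :: "(nat \<Rightarrow> nat) \<Rightarrow> complex"
    and c :: "nat \<Rightarrow> complex poly" and lam :: "nat \<Rightarrow> complex"
    and A :: "nat \<Rightarrow> complex" and B :: "nat \<Rightarrow> complex poly"
    and nu :: complex and nuj :: "nat \<Rightarrow> complex"
  assumes "n \<ge> 1"
    and "conv_ps (Suc (Suc n)) f"
    and "\<exists>\<alpha>. f \<alpha> \<noteq> 0"
    and "f (\<lambda>_. 0) = 0"
    and "c 1 \<noteq> 0"
    and "0 < Re (lam 1)"
    and "\<forall>k\<ge>1. Re (lam k) \<le> Re (lam (Suc k))"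
    and "filterlim (\<lambda>k. Re (lam k)) at_top sequentially"
    and "dsubst (Suc n) f (\<lambda>j. (ddelta ^^ j) (dphi c lam)) = (\<lambda>_. 0)"
    and "dsubst (Suc n) (pdy f n) (\<lambda>i. (ddelta ^^ i) (dphi c lam)) \<noteq> (\<lambda>_. 0)"
    and "\<forall>j\<le>n. B j \<noteq> 0 \<and> Re nu < Re (nuj j) \<and>
           dsubst (Suc n) (pdy f j) (\<lambda>i. (ddelta ^^ i) (dphi c lam)) nu = [:A j:] \<and>
           dsubst (Suc n) (pdy f j) (\<lambda>i. (ddelta ^^ i) (dphi c lam)) (nuj j) = B j \<and>
           (\<forall>\<sigma>. \<sigma> \<noteq> nu \<and> dsubst (Suc n) (pdy f j) (\<lambda>i. (ddelta ^^ i) (dphi c lam)) \<sigma> \<noteq> 0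
                 \<longrightarrow> Re (nuj j) \<le> Re \<sigma>)"
    and "\<exists>j\<le>n. A j \<noteq> 0"
  shows "\<exists>m\<ge>1. \<exists>S Lt a. is_sector S \<and>
     (\<forall>z. 0 \<le> Re z \<longrightarrow> (\<Sum>j\<le>ell n A. A j * (lam m + z) ^ j) \<noteq> 0) \<and>
     (\<forall>j\<le>n. in_Dcirc S (Lt j) \<and> Lt j (nuj j - nu) = B j \<and>
              (\<forall>\<sigma>. Lt j \<sigma> \<noteq> 0 \<longrightarrow> Re (nuj j) - Re nu \<le> Re \<sigma>)) \<and>
     (\<forall>q\<in>MI (Suc n). in_Dcirc S (a q)) \<and>
     (\<forall>q\<in>MI (Suc n). msize (Suc n) q = 1 \<longrightarrow> a q = (\<lambda>_. 0)) \<and>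
     (\<exists>\<rho>>0. \<forall>t\<in>S. (\<lambda>q. norm (deval (a q) t) * \<rho> ^ msize (Suc n) q) summable_on MI (Suc n)) \<and>
     (\<forall>q\<in>MI (Suc n).
        dshift (lam m * of_nat (msize (Suc n) q) - (lam m + nu))
          (dsubst (Suc n) (taylorc (Suc n) f q) (\<lambda>i. (ddelta ^^ i) (dphim c lam m)))
        = dadd (\<lambda>\<sigma>. \<Sum>j\<le>n. if q = unitv j
                            then (if \<sigma> = 0 \<and> j \<le> ell n A then [:A j:] else 0) + Lt j \<sigma>
                            else 0)
               (dshift (of_real (tau n A nu nuj) * of_nat (msize (Suc n) q)) (a q)))"
proof -
  define c0 where "c0 = Re (lam 1)"
  have c0: "0 < c0" using assms(6) c0_def by simp
  have mono: "Re (lam i) \<le> Re (lam j)" if "1 \<le> i" "i \<le> j" for i j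
    using lam_mono[OF assms(7) that] .
  have lf: "filterlim (\<lambda>k. Re (lam k)) at_top sequentially" by (rule assms(8))
  have ellp: "ell n A \<le> n" "A (ell n A) \<noteq> 0" "\<And>j. ell n A < j \<Longrightarrow> j \<le> n \<Longrightarrow> A j = 0"
    using ell_props[OF assms(12)] by auto
  define \<tau> where "\<tau> = tau n A nu nuj"
  have tau0: "0 \<le> \<tau>" unfolding \<tau>_def by (rule tau_nonneg) (use assms(11) ellp(1) in auto)
  obtain Mbd where Mbd: "\<And>z. Mbd < norm z \<Longrightarrow> (\<Sum>j\<le>ell n A. A j * z ^ j) \<noteq> 0"
    using L_bound[where A=A and l="ell n A", OF ellp(2)] by blast
  define Y where "Y = (\<lambda>i. (ddelta ^^ i) (dphi c lam))"
  have H9: "dsubst (Suc n) f Y = (\<lambda>_. 0)" using assms(9) unfolding Y_def .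
  have H11: "\<And>j. j \<le> n \<Longrightarrow> B j \<noteq> 0 \<and> Re nu < Re (nuj j) \<and>
           dsubst (Suc n) (pdy f j) Y nu = [:A j:] \<and>
           dsubst (Suc n) (pdy f j) Y (nuj j) = B j \<and>
           (\<forall>\<sigma>. \<sigma> \<noteq> nu \<and> dsubst (Suc n) (pdy f j) Y \<sigma> \<noteq> 0 \<longrightarrow> Re (nuj j) \<le> Re \<sigma>)"
    using assms(11) unfolding Y_def by blast
  have phi_dulac: "dulac (dphi c lam)"
    by (rule dulac_of_lam[OF lf]) (use dphi_supp in blast)
  have phi_supp: "supp_ge c0 (dphi c lam)"
    unfolding supp_ge_def
  proof (intro allI impI)
    fix s assume "dphi c lam s \<noteq> 0"
    then obtain k where "1 \<le> k" "lam k = s" using dphi_supp by blast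
    then show "c0 \<le> Re s" using mono[of 1 k] unfolding c0_def by auto
  qed
  have Ynice: "nice (Y i)" for i
    unfolding Y_def by (rule nice_of[OF dulac_ddelta[OF phi_dulac] supp_ge_ddelta[OF phi_supp]]) (use c0 in simp)
  have Ysmall: "small c0 (abst (Y i))" for i
    by (rule small_abst[OF Ynice]) (unfold Y_def, rule supp_ge_ddelta[OF phi_supp])
  define Fj where "Fj j = dsubst (Suc n) (pdy f j) Y" for j
  have Fj_nice: "nice (Fj j)" for j unfolding Fj_def by (rule dsubst_nice[OF c0 Ynice Ysmall])
  obtain j0 where j0: "j0 \<le> n" "A j0 \<noteq> 0" using assms(12) by blast
  have nu0: "0 \<le> Re nu"
  proof -
    have "Fj j0 nu \<noteq> 0" using H11[OF j0(1)] j0(2) unfolding Fj_def by simp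
    then show ?thesis using Fj_nice[of j0] unfolding nice_def nonneg_def by blast
  qed
  have Fj_supp: "supp_ge (Re nu) (Fj j)" if "j \<le> n" for j
    unfolding supp_ge_def
  proof (intro allI impI)
    fix s assume s: "Fj j s \<noteq> 0"
    show "Re nu \<le> Re s"
    proof (cases "s = nu")
      case True then show ?thesis by simp
    next
      case False
      then have "Re (nuj j) \<le> Re s" using H11[OF that] s unfolding Fj_def by blast
      then show ?thesis using H11[OF that] by simp
    qed
  qed
  define B0 where "B0 = max (max Mbd (2 * (Re nu + \<tau>))) (Max ((\<lambda>j. Re (nuj j)) ` {..n}))"
  have B0: "Mbd \<le> B0" "2 * (Re nu + \<tau>) \<le> B0" "\<And>j. j \<le> n \<Longrightarrow> Re (nuj j) \<le> B0"
  proof -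
    show "Mbd \<le> B0" "2 * (Re nu + \<tau>) \<le> B0" unfolding B0_def by auto
    fix j assume "j \<le> n"
    then have "Re (nuj j) \<le> Max ((\<lambda>j. Re (nuj j)) ` {..n})" by (intro Max_ge) auto
    then show "Re (nuj j) \<le> B0" unfolding B0_def by (simp add: le_max_iff_disj)
  qed
  obtain N where N: "1 \<le> N" "B0 < Re (lam N)"
  proof -
    have "eventually (\<lambda>k. B0 + 1 \<le> Re (lam k)) sequentially"
      using lf[unfolded filterlim_at_top] by blast
    then obtain N0 where N0: "\<And>k. k \<ge> N0 \<Longrightarrow> B0 + 1 \<le> Re (lam k)"
      unfolding eventually_sequentially by blast
    show ?thesis by (rule that[of "max N0 1"]) (use N0[of "max N0 1"] in auto)
  qed
  define T where "T = {k. Re (lam k) \<le> Re (lam N)}"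
  have fT: "finite T" unfolding T_def by (rule lam_fin[OF lf])
  have NT: "N \<in> T" unfolding T_def by simp
  define m where "m = Max T"
  have mN: "N \<le> m" unfolding m_def by (rule Max_ge[OF fT NT])
  have m1: "1 \<le> m" using mN N by simp
  have mT: "m \<in> T" unfolding m_def using fT NT by (intro Max_in) auto
  have lm: "Re (lam m) = Re (lam N)" using mT mono[OF N(1) mN] unfolding T_def by simp
  have lmB: "B0 < Re (lam m)" using lm N by simp
  have gap: "Re (lam m) < Re (lam (Suc m))"
  proof -
    have "Suc m \<notin> T" using Max_ge[OF fT, of "Suc m"] unfolding m_def by auto
    then show ?thesis unfolding T_def using lm by simp
  qed
  define R1 where "R1 = Re (lam (Suc m))"
  have R1: "Re (lam m) < R1" "\<And>j. j \<le> n \<Longrightarrow> Re (nuj j) < R1" "Re nu < R1" "0 \<le> R1"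
  proof -
    show "Re (lam m) < R1" using gap R1_def by simp
    show "\<And>j. j \<le> n \<Longrightarrow> Re (nuj j) < R1" using B0(3) lmB gap R1_def by force
    then show "Re nu < R1" using H11[of 0] by force
    show "0 \<le> R1" using gap lmB B0(2) nu0 tau0 R1_def by simp
  qed
  define Y' where "Y' = (\<lambda>i. (ddelta ^^ i) (dphim c lam m))"
  define \<psi> where "\<psi> = dpsi c lam m"
  have phim_fin: "finite {s. dphim c lam m s \<noteq> 0}" by (rule dphim_finsupp)
  have phim_supp: "supp_ge c0 (dphim c lam m)"
    unfolding supp_ge_def
  proof (intro allI impI)
    fix s assume "dphim c lam m s \<noteq> 0"
    then obtain k where "1 \<le> k" "lam k = s" using dphim_supp by blast
    then show "c0 \<le> Re s" using mono[of 1 k] unfolding c0_def by auto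
  qed
  have phim_dulac: "dulac (dphim c lam m)"
    by (rule dulac_of_lam[OF lf]) (use dphim_supp in blast)
  have psi_supp: "supp_ge R1 \<psi>"
    unfolding supp_ge_def \<psi>_def
  proof (intro allI impI)
    fix s assume "dpsi c lam m s \<noteq> 0"
    then obtain k where "m < k" "lam k = s" using dpsi_supp by blast
    then show "R1 \<le> Re s" using mono[of "Suc m" k] unfolding R1_def by auto
  qed
  have psi_dulac: "dulac \<psi>"
    unfolding \<psi>_def by (rule dulac_of_lam[OF lf]) (use dpsi_supp in blast)
  have Y'nice: "nice (Y' i)" for i
    unfolding Y'_def by (rule nice_of[OF dulac_ddelta[OF phim_dulac] supp_ge_ddelta[OF phim_supp]]) (use c0 in simp)
  have Y'small: "small c0 (abst (Y' i))" for i
    by (rule small_abst[OF Y'nice]) (unfold Y'_def, rule supp_ge_ddelta[OF phim_supp])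
  have Y'fin: "finite {l. Y' i l \<noteq> 0}" for i unfolding Y'_def by (rule finsupp_ddelta[OF phim_fin])
  have Y'supp: "Y' i l \<noteq> 0 \<Longrightarrow> c0 \<le> Re l" for i l
    using supp_ge_ddelta[OF phim_supp, of i] unfolding supp_ge_def Y'_def by blast
  define \<Delta> where "\<Delta> i = (ddelta ^^ i) \<psi>" for i
  have Dnice: "nice (\<Delta> i)" for i
    unfolding \<Delta>_def by (rule nice_of[OF dulac_ddelta[OF psi_dulac] supp_ge_ddelta[OF psi_supp]]) (use R1 in simp)
  have Dsmall: "small R1 (abst (\<Delta> i))" for i
    by (rule small_abst[OF Dnice]) (unfold \<Delta>_def, rule supp_ge_ddelta[OF psi_supp])
  have YY': "Y i = (\<lambda>l. Y' i l + \<Delta> i l)" for i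
    unfolding Y_def Y'_def \<Delta>_def \<psi>_def dphi_split[OF lf, of c m] by (rule ddelta_pow_add)
  have dY: "small R1 (abst (Y i) - abst (Y' i))" for i
  proof -
    have "abst (Y i) = abst (Y' i) + abst (\<Delta> i)"
      by (rule rep_inj) (simp add: YY' abst_inverse Y'nice Dnice Ynice[of i, unfolded YY'])
    then show ?thesis using Dsmall by simp
  qed
  have loc: "dsubst (Suc n) g Y s = dsubst (Suc n) g Y' s" if "Re s < R1" for g s
    by (rule LOC[OF c0 R1(4) Ynice Ysmall Y'nice Y'small dY that])
  have Fj'_supp: "small (Re nu) (abst (dsubst (Suc n) (pdy f j) Y'))" if "j < Suc n" for j
  proof -
    have n': "nice (dsubst (Suc n) (pdy f j) Y')" by (rule dsubst_nice[OF c0 Y'nice Y'small])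
    have "supp_ge (Re nu) (dsubst (Suc n) (pdy f j) Y')"
      unfolding supp_ge_def
    proof (intro allI impI)
      fix s assume s: "dsubst (Suc n) (pdy f j) Y' s \<noteq> 0"
      show "Re nu \<le> Re s"
      proof (cases "Re s < R1")
        case True
        then have "Fj j s \<noteq> 0" using s loc unfolding Fj_def by simp
        then show ?thesis using Fj_supp[of j] that unfolding supp_ge_def by simp
      next
        case False then show ?thesis using R1(3) by simp
      qed
    qed
    then show ?thesis by (rule small_abst[OF n'])
  qed
  have F0: "small (R1 + Re nu) (abst (dsubst (Suc n) f Y'))"
    by (rule TAY[OF c0 R1(4) nu0 Ynice Ysmall Y'nice Y'small dY H9 Fj'_supp]) (use R1(3) in auto)
  obtain r where r: "0 < r" "(\<lambda>\<alpha>. norm (f \<alpha>) * r ^ msize (Suc (Suc n)) \<alpha>) summable_on MI (Suc (Suc n))"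
    using assms(2) unfolding conv_ps_def by blast
  define \<rho>1 where "\<rho>1 = r / 2"
  have \<rho>1: "0 < \<rho>1" "0 \<le> \<rho>1" "2 * \<rho>1 \<le> r" unfolding \<rho>1_def using r by auto
  have ev: "eventually (\<lambda>U. (\<forall>j\<in>{..n}. \<forall>t. Re t \<le> - U \<and> \<bar>Im t\<bar> \<le> 1 \<longrightarrow> NS (Y' j) t \<le> \<rho>1)
       \<and> (exp (- U) \<le> \<rho>1 \<and> 0 \<le> U)) at_top"
  proof (intro eventually_conj)
    show "eventually (\<lambda>U. \<forall>j\<in>{..n}. \<forall>t. Re t \<le> - U \<and> \<bar>Im t\<bar> \<le> 1 \<longrightarrow> NS (Y' j) t \<le> \<rho>1) at_top"
      by (rule eventually_ball_finite) (use NS_small[OF Y'fin Y'supp c0 \<rho>1(1)] in auto)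
    show "eventually (\<lambda>U. exp (- U) \<le> \<rho>1) at_top"
      unfolding eventually_at_top_linorder
    proof (intro exI[of _ "- ln \<rho>1"] allI impI)
      fix U :: real assume "- ln \<rho>1 \<le> U"
      then have "exp (- U) \<le> exp (ln \<rho>1)" by simp
      then show "exp (- U) \<le> \<rho>1" using \<rho>1(1) by simp
    qed
    show "eventually (\<lambda>U::real. 0 \<le> U) at_top" by (rule eventually_ge_at_top)
  qed
  then obtain U where U: "\<And>j t. j \<le> n \<Longrightarrow> Re t \<le> - U \<Longrightarrow> \<bar>Im t\<bar> \<le> 1 \<Longrightarrow> NS (Y' j) t \<le> \<rho>1"
    "exp (- U) \<le> \<rho>1" "0 \<le> U"
    unfolding eventually_at_top_linorder by (metis atMost_iff order_refl)
  define r0 where "r0 = exp (- U)"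
  define S where "S = {t. Re t < ln r0 \<and> \<bar>Im t - 0\<bar> < 1 / 2}"
  have tS: "Re t \<le> - U" "\<bar>Im t\<bar> \<le> 1" "norm (exp t) \<le> \<rho>1" "Re t \<le> 0" if "t \<in> S" for t
  proof -
    have a: "Re t < - U" "\<bar>Im t\<bar> < 1 / 2" using that unfolding S_def r0_def by auto
    show "Re t \<le> - U" "\<bar>Im t\<bar> \<le> 1" "Re t \<le> 0" using a U(3) by auto
    have "norm (exp t) = exp (Re t)" by simp
    also have "\<dots> \<le> exp (- U)" using a by simp
    finally show "norm (exp t) \<le> \<rho>1" using U(2) by linarith
  qed
  define C where "C = infsum (\<lambda>\<beta>. norm (f \<beta>) * r ^ msize (Suc (Suc n)) \<beta>) (MI (Suc (Suc n)))"
  have C0: "0 \<le> C" unfolding C_def by (rule infsum_nonneg) (use r in simp)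
  define G where "G q = dsubst (Suc n) (taylorc (Suc n) f q) Y'" for q
  have Gnice: "nice (G q)" for q unfolding G_def by (rule dsubst_nice[OF c0 Y'nice Y'small])
  have Gok: "ok (G q) t \<and> NS (G q) t \<le> (2 / r) ^ msize (Suc n) q * C" if q: "q \<in> MI (Suc n)" and t: "t \<in> S" for q t
  proof -
    have sg: "(\<lambda>\<alpha>. norm (taylorc (Suc n) f q \<alpha>) * \<rho>1 ^ msize (Suc (Suc n)) \<alpha>) summable_on MI (Suc (Suc n))"
      by (rule taylorc_sum(1)[OF r(2) r(1) \<rho>1(2) \<rho>1(3) q])
    have b: "infsum (\<lambda>\<alpha>. norm (taylorc (Suc n) f q \<alpha>) * \<rho>1 ^ msize (Suc (Suc n)) \<alpha>) (MI (Suc (Suc n)))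
       \<le> (2 / r) ^ msize (Suc n) q * C"
      unfolding C_def by (rule taylorc_sum(2)[OF r(2) r(1) \<rho>1(2) \<rho>1(3) q])
    have Yok: "ok (Y' j) t" for j by (rule fin_supp_ok(1)[OF Y'fin])
    have YNS: "NS (Y' j) t \<le> \<rho>1" if "j < Suc n" for j using U(1)[of j t] that tS[OF t] by simp
    have "ok (G q) t" unfolding G_def
      by (rule dsubst_ok(1)[where Y=Y' and k="Suc n" and g="taylorc (Suc n) f q" and c=c0 and t=t and \<rho>=\<rho>1])
         (use c0 Y'nice Y'small Yok YNS tS(3)[OF t] sg in auto)
    moreover have "NS (G q) t \<le> infsum (\<lambda>\<alpha>. norm (taylorc (Suc n) f q \<alpha>) * \<rho>1 ^ msize (Suc (Suc n)) \<alpha>) (MI (Suc (Suc n)))"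
      unfolding G_def
      by (rule dsubst_ok(2)[where Y=Y' and k="Suc n" and g="taylorc (Suc n) f q" and c=c0 and t=t and \<rho>=\<rho>1])
         (use c0 Y'nice Y'small Yok YNS tS(3)[OF t] sg in auto)
    ultimately show ?thesis using b by linarith
  qed
  define LHS where "LHS q = dshift (lam m * of_nat (msize (Suc n) q) - (lam m + nu)) (G q)" for q
  define a where "a q = (if msize (Suc n) q = 1 then (\<lambda>_. 0)
      else dshift (- (of_real \<tau> * of_nat (msize (Suc n) q))) (LHS q))" for q
  define Lt where "Lt j = (\<lambda>\<sigma>. LHS (unitv j) \<sigma> - (if \<sigma> = 0 \<and> j \<le> ell n A then [:A j:] else 0))" for j
  have C1: "is_sector S"
    unfolding is_sector_def S_def
    by (rule exI[of _ 0], rule exI[of _ 1], rule exI[of _ r0]) (use pi_gt3 in \<open>auto simp: r0_def\<close>)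
  have C2: "\<forall>z. 0 \<le> Re z \<longrightarrow> (\<Sum>j\<le>ell n A. A j * (lam m + z) ^ j) \<noteq> 0"
  proof (intro allI impI)
    fix z :: complex assume z: "0 \<le> Re z"
    have "Mbd < Re (lam m + z)" using B0(1) lmB z by simp
    also have "\<dots> \<le> norm (lam m + z)" by (rule complex_Re_le_cmod)
    finally show "(\<Sum>j\<le>ell n A. A j * (lam m + z) ^ j) \<noteq> 0" by (rule Mbd)
  qed
  have C3: "\<forall>j\<le>n. in_Dcirc S (Lt j) \<and> Lt j (nuj j - nu) = B j \<and>
              (\<forall>\<sigma>. Lt j \<sigma> \<noteq> 0 \<longrightarrow> Re (nuj j) - Re nu \<le> Re \<sigma>)"
  proof (intro allI impI)
    fix j assume j: "j \<le> n"
    let ?F = "dsubst (Suc n) (pdy f j) Y'"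
    have jS: "j < Suc n" using j by simp
    have GU: "G (unitv j) = ?F" unfolding G_def taylorc_unitv[OF jS] ..
    have LU: "LHS (unitv j) = dshift (- nu) ?F"
      unfolding LHS_def GU msize_unitv[OF jS] by simp
    have Lt_eq: "Lt j \<sigma> = ?F (\<sigma> + nu) - (if \<sigma> = 0 \<and> j \<le> ell n A then [:A j:] else 0)" for \<sigma>
      unfolding Lt_def LU dshift_def by simp
    have H: "B j \<noteq> 0" "Re nu < Re (nuj j)" "Fj j nu = [:A j:]" "Fj j (nuj j) = B j"
      "\<And>\<sigma>. \<sigma> \<noteq> nu \<Longrightarrow> Fj j \<sigma> \<noteq> 0 \<Longrightarrow> Re (nuj j) \<le> Re \<sigma>"
      using H11[OF j] unfolding Fj_def by auto
    have supp: "Re (nuj j) - Re nu \<le> Re \<sigma>" if nz: "Lt j \<sigma> \<noteq> 0" for \<sigma>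
    proof (cases "Re (\<sigma> + nu) < R1")
      case True
      then have e: "?F (\<sigma> + nu) = Fj j (\<sigma> + nu)" using loc unfolding Fj_def by simp
      show ?thesis
      proof (cases "\<sigma> = 0")
        case True
        have "Lt j \<sigma> = [:A j:] - (if j \<le> ell n A then [:A j:] else 0)"
          using Lt_eq[of \<sigma>] e H(3) True by simp
        also have "\<dots> = 0" using ellp(3)[of j] j by (cases "j \<le> ell n A") auto
        finally show ?thesis using nz by simp
      next
        case False
        then have "Fj j (\<sigma> + nu) \<noteq> 0" using nz Lt_eq[of \<sigma>] e by simp
        moreover have "\<sigma> + nu \<noteq> nu" using False by simp
        ultimately have "Re (nuj j) \<le> Re (\<sigma> + nu)" using H(5) by blast
        then show ?thesis by simp
      qed
    next
      case False
      then show ?thesis using R1(2)[OF j] by simp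
    qed
    have Bj: "Lt j (nuj j - nu) = B j"
    proof -
      have ne: "nuj j - nu \<noteq> 0" using H(2) by auto
      have "Re (nuj j) < R1" by (rule R1(2)[OF j])
      then have "?F (nuj j) = Fj j (nuj j)" using loc unfolding Fj_def by simp
      then show ?thesis using Lt_eq[of "nuj j - nu"] ne H(4) by simp
    qed
    define p where "p = (if j \<le> ell n A then [:A j:] else 0)"
    have Lt_alt: "Lt j = (\<lambda>\<sigma>. LHS (unitv j) \<sigma> - dmon 0 p \<sigma>)"
      unfolding Lt_def p_def dmon0_if[symmetric] ..
    have dul: "dulac (Lt j)" unfolding Lt_alt LU
      by (rule dulac_diff[OF dulac_dshift dulac_dmon]) (use dsubst_nice[OF c0 Y'nice Y'small] in \<open>simp add: nice_def\<close>)
    have pos: "\<forall>l. Lt j l \<noteq> 0 \<longrightarrow> 0 < Re l" using supp H(2) by force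
    have summ: "\<forall>t\<in>S. (\<lambda>l. poly (Lt j l) t * exp (l * t)) summable_on UNIV"
    proof
      fix t assume t: "t \<in> S"
      have o1: "ok (LHS (unitv j)) t" unfolding LHS_def
        by (rule dshift_ok(1)) (use Gok[OF unitv_MI[OF j] t] in simp)
      have s1: "(\<lambda>l. poly (LHS (unitv j) l) t * exp (l * t)) summable_on UNIV" by (rule ok_summable[OF o1])
      have s2: "(\<lambda>l. poly (dmon 0 p l) t * exp (l * t)) summable_on UNIV" by (rule ok_summable[OF dmon_ok(1)])
      have "(\<lambda>l. poly (LHS (unitv j) l) t * exp (l * t) - poly (dmon 0 p l) t * exp (l * t)) summable_on UNIV"
        by (rule summable_diff_c[OF s1 s2])
      then show "(\<lambda>l. poly (Lt j l) t * exp (l * t)) summable_on UNIV"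
        unfolding Lt_alt by (simp add: left_diff_distrib)
    qed
    show "in_Dcirc S (Lt j) \<and> Lt j (nuj j - nu) = B j \<and> (\<forall>\<sigma>. Lt j \<sigma> \<noteq> 0 \<longrightarrow> Re (nuj j) - Re nu \<le> Re \<sigma>)"
      unfolding in_Dcirc_def using dul pos summ Bj supp by blast
  qed
  define cq where "cq q = - (of_real \<tau> * of_nat (msize (Suc n) q)) + (lam m * of_nat (msize (Suc n) q) - (lam m + nu))" for q
  have aq: "a q = dshift (cq q) (G q)" if "msize (Suc n) q \<noteq> 1" for q
    unfolding a_def LHS_def cq_def using that by (simp add: dshift_dshift)
  have Recq: "0 < Re (cq q)" if "2 \<le> msize (Suc n) q" for q
  proof -
    have "Re nu + \<tau> * real (msize (Suc n) q) < (real (msize (Suc n) q) - 1) * Re (lam m)"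
      by (rule coeff_real_bound[OF that]) (use B0(2) lmB nu0 tau0 in auto)
    then show ?thesis unfolding cq_def by (simp add: algebra_simps)
  qed
  have C4: "\<forall>q\<in>MI (Suc n). in_Dcirc S (a q)"
  proof
    fix q assume q: "q \<in> MI (Suc n)"
    show "in_Dcirc S (a q)"
    proof (cases "msize (Suc n) q = 1")
      case True
      then show ?thesis unfolding a_def using in_Dcirc_zero by simp
    next
      case False
      have dul: "dulac (a q)" unfolding aq[OF False]
        by (rule dulac_dshift) (use Gnice in \<open>simp add: nice_def\<close>)
      have pos: "0 < Re l" if nz: "a q l \<noteq> 0" for l
      proof -
        have g: "G q (l - cq q) \<noteq> 0" using nz unfolding aq[OF False] dshift_def .
        show ?thesis
        proof (cases "msize (Suc n) q = 0")
          case True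
          then have q0: "q = (\<lambda>_. 0)" using msize_zero q by blast
          have "G q = dsubst (Suc n) f Y'" unfolding G_def q0 taylorc_zero ..
          then have s: "dsubst (Suc n) f Y' (l - cq q) \<noteq> 0" using g by simp
          have sp: "\<forall>l. dsubst (Suc n) f Y' l \<noteq> 0 \<longrightarrow> R1 + Re nu \<le> Re l"
            using supp_ge_of_small[OF dsubst_nice[OF c0 Y'nice Y'small] F0] unfolding supp_ge_def .
          have "R1 + Re nu \<le> Re (l - cq q)" using sp s by blast
          moreover have "cq q = - (lam m + nu)" unfolding cq_def True by simp
          ultimately show ?thesis using R1(1) by simp
        next
          case False2: False
          then have "2 \<le> msize (Suc n) q" using False by simp
          then have "0 < Re (cq q)" by (rule Recq)
          moreover have "0 \<le> Re (l - cq q)" using Gnice[of q] g unfolding nice_def nonneg_def by blast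
          ultimately show ?thesis by simp
        qed
      qed
      have summ: "\<forall>t\<in>S. (\<lambda>l. poly (a q l) t * exp (l * t)) summable_on UNIV"
      proof
        fix t assume t: "t \<in> S"
        have "ok (a q) t" unfolding aq[OF False] by (rule dshift_ok(1)) (use Gok[OF q t] in simp)
        then show "(\<lambda>l. poly (a q l) t * exp (l * t)) summable_on UNIV" by (rule ok_summable)
      qed
      show ?thesis unfolding in_Dcirc_def using dul pos summ by blast
    qed
  qed
  have C5: "\<forall>q\<in>MI (Suc n). msize (Suc n) q = 1 \<longrightarrow> a q = (\<lambda>_. 0)" unfolding a_def by simp
  define Lm where "Lm = exp (norm (lam m))"
  have Lm: "1 \<le> Lm" "0 < Lm" unfolding Lm_def by auto
  define \<rho> where "\<rho> = r / (4 * Lm)"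
  have \<rho>: "0 < \<rho>" unfolding \<rho>_def using r Lm by simp
  have C6: "\<exists>\<rho>>0. \<forall>t\<in>S. (\<lambda>q. norm (deval (a q) t) * \<rho> ^ msize (Suc n) q) summable_on MI (Suc n)"
  proof (intro exI[of _ \<rho>] conjI ballI)
    show "0 < \<rho>" by (rule \<rho>)
    fix t assume t: "t \<in> S"
    define Kt where "Kt = norm (exp (- (lam m + nu) * t)) + exp (norm nu)"
    have Kt0: "0 \<le> Kt" unfolding Kt_def by simp
    have bnd: "norm (deval (a q) t) * \<rho> ^ msize (Suc n) q \<le> Kt * C * (1 / 2) ^ msize (Suc n) q"
      if q: "q \<in> MI (Suc n)" for q
    proof (cases "msize (Suc n) q = 1")
      case True
      then have "a q = (\<lambda>_. 0)" by (simp add: a_def)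
      then show ?thesis using Kt0 C0 by (simp add: deval_zero)
    next
      case False
      let ?Q = "msize (Suc n) q"
      have og: "ok (G q) t" "NS (G q) t \<le> (2 / r) ^ ?Q * C" using Gok[OF q t] by auto
      have oa: "ok (a q) t" "NS (a q) t = norm (exp (cq q * t)) * NS (G q) t"
        unfolding aq[OF False] using dshift_ok[OF og(1)] by auto
      have E: "norm (exp (cq q * t)) \<le> Kt * Lm ^ ?Q"
      proof (cases "?Q = 0")
        case True
        have "cq q = - (lam m + nu)" unfolding cq_def True by simp
        then show ?thesis unfolding Kt_def True by simp
      next
        case False2: False
        then have Q2: "2 \<le> ?Q" using False by simp
        have "norm (exp (cq q * t)) = exp (Re (cq q) * Re t - Im (cq q) * Im t)" by simp
        also have "\<dots> \<le> exp (real ?Q * norm (lam m) + norm nu)"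
        proof (rule exp_le_cancel_iff[THEN iffD2])
          have r1: "Re (cq q) * Re t \<le> 0"
            using Recq[OF Q2] tS(4)[OF t] by (simp add: mult_nonneg_nonpos)
          have imc: "Im (cq q) = (real ?Q - 1) * Im (lam m) - Im nu"
            unfolding cq_def by (simp add: algebra_simps)
          have "- (Im (cq q) * Im t) \<le> \<bar>Im (cq q)\<bar> * \<bar>Im t\<bar>" by (simp add: abs_mult[symmetric])
          also have "\<dots> \<le> \<bar>Im (cq q)\<bar> * 1" by (rule mult_left_mono) (use tS(2)[OF t] in auto)
          also have "\<dots> \<le> (real ?Q - 1) * \<bar>Im (lam m)\<bar> + \<bar>Im nu\<bar>"
          proof -
            have "\<bar>(real ?Q - 1) * Im (lam m) - Im nu\<bar> \<le> \<bar>(real ?Q - 1) * Im (lam m)\<bar> + \<bar>Im nu\<bar>"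
              by (rule abs_triangle_ineq4)
            also have "\<bar>(real ?Q - 1) * Im (lam m)\<bar> = (real ?Q - 1) * \<bar>Im (lam m)\<bar>"
              using Q2 by (simp add: abs_mult)
            finally show ?thesis unfolding imc by simp
          qed
          also have "\<dots> \<le> real ?Q * norm (lam m) + norm nu"
          proof -
            have "(real ?Q - 1) * \<bar>Im (lam m)\<bar> \<le> real ?Q * \<bar>Im (lam m)\<bar>" by (simp add: mult_right_mono)
            also have "\<dots> \<le> real ?Q * norm (lam m)" by (rule mult_left_mono) (auto simp: abs_Im_le_cmod)
            finally show ?thesis using abs_Im_le_cmod[of nu] by linarith
          qed
          finally show "Re (cq q) * Re t - Im (cq q) * Im t \<le> real ?Q * norm (lam m) + norm nu"
            using r1 by linarith
        qed
        also have "\<dots> = exp (norm nu) * Lm ^ ?Q"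
          unfolding Lm_def by (simp add: exp_add exp_of_nat_mult[symmetric] mult.commute)
        also have "\<dots> \<le> Kt * Lm ^ ?Q" unfolding Kt_def by (intro mult_right_mono) (use Lm in auto)
        finally show ?thesis .
      qed
      have "norm (deval (a q) t) \<le> NS (a q) t" by (rule deval_bound[OF oa(1)])
      also have "\<dots> \<le> Kt * Lm ^ ?Q * ((2 / r) ^ ?Q * C)"
        unfolding oa(2) by (rule mult_mono[OF E og(2)]) (use Kt0 Lm NS_nonneg in auto)
      finally have "norm (deval (a q) t) * \<rho> ^ ?Q \<le> Kt * Lm ^ ?Q * ((2 / r) ^ ?Q * C) * \<rho> ^ ?Q"
        by (rule mult_right_mono) (use \<rho> in simp)
      also have "\<dots> = Kt * C * (Lm * (2 / r) * \<rho>) ^ ?Q"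
      proof -
        have pw: "(Lm * (2 / r) * \<rho>) ^ ?Q = Lm ^ ?Q * (2 / r) ^ ?Q * \<rho> ^ ?Q" by (simp only: power_mult_distrib)
        show ?thesis unfolding pw by (simp only: ac_simps)
      qed
      also have "Lm * (2 / r) * \<rho> = 1 / 2" unfolding \<rho>_def using Lm r by (simp add: field_simps)
      finally show ?thesis by simp
    qed
    have sg: "(\<lambda>q. Kt * C * (1 / 2 :: real) ^ msize (Suc n) q) summable_on MI (Suc n)"
      by (rule summable_on_cmult_right) (rule geo_MI, auto)
    show "(\<lambda>q. norm (deval (a q) t) * \<rho> ^ msize (Suc n) q) summable_on MI (Suc n)"
      by (rule summable_on_comparison_test[OF sg]) (use bnd \<rho> in auto)
  qed
  have C7: "\<forall>q\<in>MI (Suc n).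
        dshift (lam m * of_nat (msize (Suc n) q) - (lam m + nu))
          (dsubst (Suc n) (taylorc (Suc n) f q) (\<lambda>i. (ddelta ^^ i) (dphim c lam m)))
        = dadd (\<lambda>\<sigma>. \<Sum>j\<le>n. if q = unitv j
                            then (if \<sigma> = 0 \<and> j \<le> ell n A then [:A j:] else 0) + Lt j \<sigma>
                            else 0)
               (dshift (of_real (tau n A nu nuj) * of_nat (msize (Suc n) q)) (a q))"
  proof
    fix q assume q: "q \<in> MI (Suc n)"
    have L: "dshift (lam m * of_nat (msize (Suc n) q) - (lam m + nu))
          (dsubst (Suc n) (taylorc (Suc n) f q) (\<lambda>i. (ddelta ^^ i) (dphim c lam m))) = LHS q"
      unfolding LHS_def G_def Y'_def ..
    show "dshift (lam m * of_nat (msize (Suc n) q) - (lam m + nu))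
          (dsubst (Suc n) (taylorc (Suc n) f q) (\<lambda>i. (ddelta ^^ i) (dphim c lam m)))
        = dadd (\<lambda>\<sigma>. \<Sum>j\<le>n. if q = unitv j
                            then (if \<sigma> = 0 \<and> j \<le> ell n A then [:A j:] else 0) + Lt j \<sigma>
                            else 0)
               (dshift (of_real (tau n A nu nuj) * of_nat (msize (Suc n) q)) (a q))"
      unfolding L
    proof (cases "msize (Suc n) q = 1")
      case True
      obtain j where j: "j < Suc n" "q = unitv j" using msize_one[OF q True] by blast
      have sum: "(\<Sum>j'\<le>n. if q = unitv j' then (if \<sigma> = 0 \<and> j' \<le> ell n A then [:A j':] else 0) + Lt j' \<sigma> else 0)
          = (if \<sigma> = 0 \<and> j \<le> ell n A then [:A j:] else 0) + Lt j \<sigma>" for \<sigma>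
      proof -
        have "(\<Sum>j'\<le>n. if q = unitv j' then (if \<sigma> = 0 \<and> j' \<le> ell n A then [:A j':] else 0) + Lt j' \<sigma> else 0)
          = (\<Sum>j'\<le>n. if j' = j then (if \<sigma> = 0 \<and> j' \<le> ell n A then [:A j':] else 0) + Lt j' \<sigma> else 0)"
          by (rule sum.cong[OF refl]) (use j unitv_inj in auto)
        also have "\<dots> = (if \<sigma> = 0 \<and> j \<le> ell n A then [:A j:] else 0) + Lt j \<sigma>"
          using j by (simp add: sum.delta)
        finally show ?thesis .
      qed
      have a0: "a q = (\<lambda>_. 0)" using True by (simp add: a_def)
      show "LHS q = dadd (\<lambda>\<sigma>. \<Sum>j\<le>n. if q = unitv j
                            then (if \<sigma> = 0 \<and> j \<le> ell n A then [:A j:] else 0) + Lt j \<sigma>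
                            else 0)
               (dshift (of_real (tau n A nu nuj) * of_nat (msize (Suc n) q)) (a q))"
        unfolding dadd_def sum a0 by (rule ext) (simp add: dshift_def Lt_def j(2))
    next
      case False
      have sum: "(\<Sum>j\<le>n. if q = unitv j then (if \<sigma> = 0 \<and> j \<le> ell n A then [:A j:] else 0) + Lt j \<sigma> else 0) = 0"
        for \<sigma>
      proof (rule sum.neutral, rule ballI)
        fix j assume "j \<in> {..n}"
        then have "msize (Suc n) (unitv j) = 1" by (intro msize_unitv) auto
        then have "q \<noteq> unitv j" using False by auto
        then show "(if q = unitv j then (if \<sigma> = 0 \<and> j \<le> ell n A then [:A j:] else 0) + Lt j \<sigma> else 0) = 0" by simp
      qed
      have "dshift (of_real (tau n A nu nuj) * of_nat (msize (Suc n) q)) (a q) = LHS q"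
        unfolding a_def \<tau>_def using False by (simp add: dshift_dshift dshift_def)
      then show "LHS q = dadd (\<lambda>\<sigma>. \<Sum>j\<le>n. if q = unitv j
                            then (if \<sigma> = 0 \<and> j \<le> ell n A then [:A j:] else 0) + Lt j \<sigma>
                            else 0)
               (dshift (of_real (tau n A nu nuj) * of_nat (msize (Suc n) q)) (a q))"
        unfolding dadd_def sum by simp
    qed
  qed
  show ?thesis
  proof (rule exI[of _ m], rule conjI[OF m1], rule exI[of _ S], rule exI[of _ Lt], rule exI[of _ a])
    show "is_sector S \<and>
     (\<forall>z. 0 \<le> Re z \<longrightarrow> (\<Sum>j\<le>ell n A. A j * (lam m + z) ^ j) \<noteq> 0) \<and>
     (\<forall>j\<le>n. in_Dcirc S (Lt j) \<and> Lt j (nuj j - nu) = B j \<and>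
              (\<forall>\<sigma>. Lt j \<sigma> \<noteq> 0 \<longrightarrow> Re (nuj j) - Re nu \<le> Re \<sigma>)) \<and>
     (\<forall>q\<in>MI (Suc n). in_Dcirc S (a q)) \<and>
     (\<forall>q\<in>MI (Suc n). msize (Suc n) q = 1 \<longrightarrow> a q = (\<lambda>_. 0)) \<and>
     (\<exists>\<rho>>0. \<forall>t\<in>S. (\<lambda>q. norm (deval (a q) t) * \<rho> ^ msize (Suc n) q) summable_on MI (Suc n)) \<and>
     (\<forall>q\<in>MI (Suc n).
        dshift (lam m * of_nat (msize (Suc n) q) - (lam m + nu))
          (dsubst (Suc n) (taylorc (Suc n) f q) (\<lambda>i. (ddelta ^^ i) (dphim c lam m)))
        = dadd (\<lambda>\<sigma>. \<Sum>j\<le>n. if q = unitv j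
                            then (if \<sigma> = 0 \<and> j \<le> ell n A then [:A j:] else 0) + Lt j \<sigma>
                            else 0)
               (dshift (of_real (tau n A nu nuj) * of_nat (msize (Suc n) q)) (a q)))"
      by (intro conjI C1 C2 C3 C4 C5 C6 C7)
  qed
qed

end
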